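(* Let $I, J$ be completely regular Hausdorff spaces, $X, Y$ Hausdorff locally convex topological vector spaces over $\mathbb{C}$, with $X\otimes Y$ given a locally convex Hausdorff topology for which $(x,y)\mapsto x\otimes y$ is continuous. Then: (a) if $I \times J$ is locally compact, then $C_{0}(I \times J, X \otimes Y)$ is the closure of $C_{0}(I, X) \otimes C_{0}(J, Y)$ in the uniform topology; (b) $C_{b}(I \times J, X \otimes Y)$ is the closure of $C_{b}(I, X) \otimes C_{b}(J, Y)$ in the strict topology; (c) $C(I \times J, X \otimes Y)$ is the closure of $C(I, X) \otimes C(J, Y)$ in the compact-open topology (and in the point-open topology).
   Context: For $f:I\to X$, $g:J\to Y$, $(f\otimes g)(t,s)=f(t)\otimes g(s)$ and $\mathcal{W}\otimes\mathcal{V}=\mathrm{span}\{f\otimes g:f\in\mathcal{W},g\in\mathcal{V}\}$. For a locally convex $Z$ with seminorms $\mathfrak{A}$: $g:\Omega\to Z$ vanishes at infinity if for each $p\in\mathfrak{A}$, $\epsilon>0$ the closure of $\{x:p(g(x))\ge\epsilon\}$ is compact; $C_0(\Omega,Z)$ are continuous functions vanishing at infinity; $C_b(\Omega,Z)$ continuous functions with bounded range. The uniform topology uses seminorms $f\mapsto\sup_\Omega p(f)$. The strict topology on $C_b(\Omega,Z)$ ($\Omega$ completely regular Hausdorff) is given by seminorms $f\mapsto\sup_x v(x)p(f(x))$ where $p\in\mathfrak{A}$ and $v:\Omega\to\mathbb{R}_+$ ranges over upper semicontinuous functions vanishing at infinity. The compact-open (resp. point-open) topology uses seminorms $f\mapsto\sup_K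 p(f)$ with $K$ compact (resp. finite). *)

theory Defs
  imports "HOL-Analysis.Analysis"
begin

definition seminorm :: "(complex \<Rightarrow> 'x \<Rightarrow> 'x) \<Rightarrow> ('x::ab_group_add \<Rightarrow> real) \<Rightarrow> bool" where
  "seminorm s p \<longleftrightarrow> (\<forall>x y. p (x + y) \<le> p x + p y) \<and> (\<forall>c x. p (s c x) = cmod c * p x)"

text \<open>A Hausdorff locally convex space over the complex numbers: a complex vector space
  together with a separating family of seminorms defining its topology.\<close>
definition hlcs :: "(complex \<Rightarrow> 'x \<Rightarrow> 'x) \<Rightarrow> ('x::ab_group_add \<Rightarrow> real) set \<Rightarrow> bool" where
  "hlcs s A \<longleftrightarrow> vector_space s \<and> (\<forall>p\<in>A. seminorm s p) \<and> (\<forall>x. x \<noteq> 0 \<longrightarrow> (\<exists>p\<in>A. p x \<noteq> 0))"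

definition semtop :: "('x::ab_group_add \<Rightarrow> real) set \<Rightarrow> 'x topology" where
  "semtop A = topology (\<lambda>U. \<forall>x\<in>U. \<exists>P e. finite P \<and> P \<subseteq> A \<and> e > 0 \<and>
                                  {y. \<forall>p\<in>P. p (y - x) < e} \<subseteq> U)"

text \<open>\<open>tp\<close> makes \<open>Z\<close> the algebraic tensor product \<open>X \<otimes> Y\<close> (up to isomorphism):
  \<open>tp\<close> is bilinear, its values span \<open>Z\<close>, and it maps pairs of linearly independent
  sets to linearly independent sets (so the induced map \<open>X \<otimes> Y \<rightarrow> Z\<close> is bijective).\<close>
definition alg_tensor ::
  "(complex \<Rightarrow> 'x \<Rightarrow> 'x) \<Rightarrow> (complex \<Rightarrow> 'y \<Rightarrow> 'y) \<Rightarrow> (complex \<Rightarrow> 'z \<Rightarrow> 'z)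
     \<Rightarrow> ('x::ab_group_add \<Rightarrow> 'y::ab_group_add \<Rightarrow> 'z::ab_group_add) \<Rightarrow> bool" where
  "alg_tensor sX sY sZ tp \<longleftrightarrow>
     (\<forall>y. Vector_Spaces.linear sX sZ (\<lambda>x. tp x y)) \<and>
     (\<forall>x. Vector_Spaces.linear sY sZ (\<lambda>y. tp x y)) \<and>
     module.span sZ {tp x y | x y. True} = UNIV \<and>
     (\<forall>A B. \<not> module.dependent sX A \<and> \<not> module.dependent sY B \<longrightarrow>
        inj_on (\<lambda>(a, b). tp a b) (A \<times> B) \<and>
        \<not> module.dependent sZ ((\<lambda>(a, b). tp a b) ` (A \<times> B)))"

text \<open>Functions are taken extensional: zero outside the underlying space.\<close>
definition Cfun :: "'a topology \<Rightarrow> ('z::ab_group_add \<Rightarrow> real) set \<Rightarrow> ('a \<Rightarrow> 'z) set" where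
  "Cfun \<Omega> A = {f. continuous_map \<Omega> (semtop A) f \<and> (\<forall>x. x \<notin> topspace \<Omega> \<longrightarrow> f x = 0)}"

definition vanishes_at_infinity :: "'a topology \<Rightarrow> ('z \<Rightarrow> real) set \<Rightarrow> ('a \<Rightarrow> 'z) \<Rightarrow> bool" where
  "vanishes_at_infinity \<Omega> A g \<longleftrightarrow>
     (\<forall>p\<in>A. \<forall>e>0. compactin \<Omega> (\<Omega> closure_of {x \<in> topspace \<Omega>. p (g x) \<ge> e}))"

definition C0fun :: "'a topology \<Rightarrow> ('z::ab_group_add \<Rightarrow> real) set \<Rightarrow> ('a \<Rightarrow> 'z) set" where
  "C0fun \<Omega> A = {f \<in> Cfun \<Omega> A. vanishes_at_infinity \<Omega> A f}"

definition Cbfun :: "'a topology \<Rightarrow> ('z::ab_group_add \<Rightarrow> real) set \<Rightarrow> ('a \<Rightarrow> 'z) set" where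
  "Cbfun \<Omega> A = {f \<in> Cfun \<Omega> A. \<forall>p\<in>A. \<exists>C. \<forall>x\<in>topspace \<Omega>. p (f x) \<le> C}"

definition tensor_fun :: "('x \<Rightarrow> 'y \<Rightarrow> 'z) \<Rightarrow> ('i \<Rightarrow> 'x) \<Rightarrow> ('j \<Rightarrow> 'y) \<Rightarrow> ('i \<times> 'j \<Rightarrow> 'z)" where
  "tensor_fun tp f g = (\<lambda>(t, s). tp (f t) (g s))"

definition tensor_span ::
  "(complex \<Rightarrow> 'z \<Rightarrow> 'z) \<Rightarrow> ('x \<Rightarrow> 'y \<Rightarrow> 'z::ab_group_add) \<Rightarrow> ('i \<Rightarrow> 'x) set \<Rightarrow> ('j \<Rightarrow> 'y) set
     \<Rightarrow> ('i \<times> 'j \<Rightarrow> 'z) set" where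
  "tensor_span sZ tp W V =
     {(\<lambda>u. \<Sum>k<(n::nat). sZ (c k) (tensor_fun tp (f k) (g k) u)) | n c f g.
        \<forall>k<n. f k \<in> W \<and> g k \<in> V}"

definition ssup :: "'a set \<Rightarrow> ('a \<Rightarrow> real) \<Rightarrow> real" where
  "ssup S h = Sup (insert 0 (h ` S))"

definition uniform_seminorms :: "'a topology \<Rightarrow> ('z \<Rightarrow> real) set \<Rightarrow> (('a \<Rightarrow> 'z) \<Rightarrow> real) set" where
  "uniform_seminorms \<Omega> A = {(\<lambda>f. ssup (topspace \<Omega>) (\<lambda>x. p (f x))) | p. p \<in> A}"

definition usc :: "'a topology \<Rightarrow> ('a \<Rightarrow> real) \<Rightarrow> bool" where
  "usc \<Omega> v \<longleftrightarrow> (\<forall>a. openin \<Omega> {x \<in> topspace \<Omega>. v x < a})"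

definition strict_weight :: "'a topology \<Rightarrow> ('a \<Rightarrow> real) \<Rightarrow> bool" where
  "strict_weight \<Omega> v \<longleftrightarrow> (\<forall>x\<in>topspace \<Omega>. v x \<ge> 0) \<and> usc \<Omega> v \<and>
     (\<forall>e>0. compactin \<Omega> (\<Omega> closure_of {x \<in> topspace \<Omega>. \<bar>v x\<bar> \<ge> e}))"

definition strict_seminorms :: "'a topology \<Rightarrow> ('z \<Rightarrow> real) set \<Rightarrow> (('a \<Rightarrow> 'z) \<Rightarrow> real) set" where
  "strict_seminorms \<Omega> A = {(\<lambda>f. ssup (topspace \<Omega>) (\<lambda>x. v x * p (f x))) | p v. p \<in> A \<and> strict_weight \<Omega> v}"

definition compact_open_seminorms :: "'a topology \<Rightarrow> ('z \<Rightarrow> real) set \<Rightarrow> (('a \<Rightarrow> 'z) \<Rightarrow> real) set" where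
  "compact_open_seminorms \<Omega> A = {(\<lambda>f. ssup K (\<lambda>x. p (f x))) | p K. p \<in> A \<and> compactin \<Omega> K}"

definition point_open_seminorms :: "'a topology \<Rightarrow> ('z \<Rightarrow> real) set \<Rightarrow> (('a \<Rightarrow> 'z) \<Rightarrow> real) set" where
  "point_open_seminorms \<Omega> A = {(\<lambda>f. ssup K (\<lambda>x. p (f x))) | p K. p \<in> A \<and> finite K \<and> K \<subseteq> topspace \<Omega>}"

definition closure_in_fs :: "(('a \<Rightarrow> 'z::ab_group_add) \<Rightarrow> real) set \<Rightarrow> ('a \<Rightarrow> 'z) set \<Rightarrow> ('a \<Rightarrow> 'z) set
     \<Rightarrow> ('a \<Rightarrow> 'z) set" where
  "closure_in_fs S M W = {F \<in> M. \<forall>P. finite P \<and> P \<subseteq> S \<longrightarrow>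
      (\<forall>e>0. \<exists>w\<in>W. \<forall>q\<in>P. q (\<lambda>u. F u - w u) < e)}"

end

theory Submission
  imports Defs
begin


lemma vs_module: "vector_space s \<Longrightarrow> module s"
  by (simp add: vector_space_def module_def)

context
  fixes s :: "complex \<Rightarrow> 'x::ab_group_add \<Rightarrow> 'x" and p :: "'x \<Rightarrow> real"
  assumes vs: "vector_space s" and sn: "seminorm s p"
begin

interpretation M: module s using vs by (rule vs_module)

lemma sn_add: "p (x + y) \<le> p x + p y"
  using sn by (simp add: seminorm_def)

lemma sn_scale: "p (s c x) = cmod c * p x"
  using sn by (simp add: seminorm_def)

lemma sn_zero: "p 0 = 0"
  using sn_scale[of 0 0] by simp

lemma sn_neg: "p (- x) = p x"
  using sn_scale[of "-1" x] by simp

lemma sn_nonneg: "0 \<le> p x"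
  using sn_add[of x "-x"] sn_zero sn_neg[of x] by simp

lemma sn_diff_commute: "p (x - y) = p (y - x)"
  using sn_neg[of "x - y"] by simp

lemma sn_diff_tri: "p (x - z) \<le> p (x - y) + p (y - z)"
  using sn_add[of "x - y" "y - z"] by simp

lemma sn_sub_le: "p x \<le> p y + p (x - y)"
  using sn_add[of y "x - y"] by simp

lemma sn_abs_diff: "\<bar>p x - p y\<bar> \<le> p (x - y)"
  using sn_sub_le[of x y] sn_sub_le[of y x] sn_diff_commute[of x y] by linarith

lemma sn_sum: "p (sum f A) \<le> (\<Sum>a\<in>A. p (f a))"
proof (induction A rule: infinite_finite_induct)
  case (insert a A)
  then show ?case using sn_add[of "f a" "sum f A"] by simp
qed (simp_all add: sn_zero)

lemma sn_scale_real: "p (s (complex_of_real a) x) = \<bar>a\<bar> * p x"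
  by (simp add: sn_scale)

end

lemma seminorm_sum:
  assumes "vector_space s" "\<And>p. p \<in> P \<Longrightarrow> seminorm s p"
  shows "seminorm s (\<lambda>z. \<Sum>p\<in>P. p z)"
  unfolding seminorm_def
proof (intro conjI allI)
  fix x y show "(\<Sum>p\<in>P. p (x + y)) \<le> (\<Sum>p\<in>P. p x) + (\<Sum>p\<in>P. p y)"
    by (simp add: sum.distrib[symmetric]) (rule sum_mono, simp add: sn_add[OF assms(1) assms(2)])
next
  fix c x show "(\<Sum>p\<in>P. p (s c x)) = cmod c * (\<Sum>p\<in>P. p x)"
    by (simp add: sum_distrib_left) (rule sum.cong, simp_all add: sn_scale[OF assms(1) assms(2)])
qed

lemma sum_seminorm_ge:
  assumes "vector_space s" "\<And>p. p \<in> P \<Longrightarrow> seminorm s p" "finite P" "q \<in> P"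
  shows "q z \<le> (\<Sum>p\<in>P. p z)"
  using assms by (intro member_le_sum) (auto intro: sn_nonneg)

section \<open>The topology generated by seminorms\<close>

lemma istopology_semtop:
  fixes A :: "('x::ab_group_add \<Rightarrow> real) set"
  shows "istopology (\<lambda>U. \<forall>x\<in>U. \<exists>P e. finite P \<and> P \<subseteq> A \<and> e > 0 \<and> {y. \<forall>p\<in>P. p (y - x) < e} \<subseteq> U)"
  unfolding istopology_def
proof (intro conjI allI impI)
  fix S T
  assume S: "\<forall>x\<in>S. \<exists>P e. finite P \<and> P \<subseteq> A \<and> e > 0 \<and> {y. \<forall>p\<in>P. p (y - x) < e} \<subseteq> S"
    and T: "\<forall>x\<in>T. \<exists>P e. finite P \<and> P \<subseteq> A \<and> e > 0 \<and> {y. \<forall>p\<in>P. p (y - x) < e} \<subseteq> T"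
  show "\<forall>x\<in>S \<inter> T. \<exists>P e. finite P \<and> P \<subseteq> A \<and> e > 0 \<and> {y. \<forall>p\<in>P. p (y - x) < e} \<subseteq> S \<inter> T"
  proof
    fix x assume x: "x \<in> S \<inter> T"
    have "x \<in> S" "x \<in> T" using x by auto
    then obtain P1 e1 P2 e2 where 1: "finite P1" "P1 \<subseteq> A" "e1 > 0" "{y. \<forall>p\<in>P1. p (y - x) < e1} \<subseteq> S"
      and 2: "finite P2" "P2 \<subseteq> A" "e2 > 0" "{y. \<forall>p\<in>P2. p (y - x) < e2} \<subseteq> T"
      using S T by (elim ballE exE conjE) auto
    show "\<exists>P e. finite P \<and> P \<subseteq> A \<and> e > 0 \<and> {y. \<forall>p\<in>P. p (y - x) < e} \<subseteq> S \<inter> T"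
    proof (intro exI conjI)
      show "finite (P1 \<union> P2)" "P1 \<union> P2 \<subseteq> A" "min e1 e2 > 0" using 1 2 by auto
      show "{y. \<forall>p\<in>P1 \<union> P2. p (y - x) < min e1 e2} \<subseteq> S \<inter> T"
      proof
        fix y assume y: "y \<in> {y. \<forall>p\<in>P1 \<union> P2. p (y - x) < min e1 e2}"
        then have "y \<in> {y. \<forall>p\<in>P1. p (y - x) < e1}" "y \<in> {y. \<forall>p\<in>P2. p (y - x) < e2}" by auto
        then show "y \<in> S \<inter> T" using 1(4) 2(4) by blast
      qed
    qed
  qed
next
  fix K :: "'x set set"
  assume K: "\<forall>K\<in>K. \<forall>x\<in>K. \<exists>P e. finite P \<and> P \<subseteq> A \<and> e > 0 \<and> {y. \<forall>p\<in>P. p (y - x) < e} \<subseteq> K"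
  show "\<forall>x\<in>\<Union>K. \<exists>P e. finite P \<and> P \<subseteq> A \<and> e > 0 \<and> {y. \<forall>p\<in>P. p (y - x) < e} \<subseteq> \<Union>K"
  proof
    fix x assume "x \<in> \<Union>K"
    then obtain K0 where K0: "K0 \<in> K" "x \<in> K0" by blast
    have "\<exists>P e. finite P \<and> P \<subseteq> A \<and> e > 0 \<and> {y. \<forall>p\<in>P. p (y - x) < e} \<subseteq> K0"
      using K K0 by (meson Ball_def)
    then obtain P e where Pe: "finite P" "P \<subseteq> A" "e > 0" "{y. \<forall>p\<in>P. p (y - x) < e} \<subseteq> K0"
      by (elim exE conjE) simp
    have "K0 \<subseteq> \<Union>K" using K0(1) by (rule Union_upper)
    then show "\<exists>P e. finite P \<and> P \<subseteq> A \<and> e > 0 \<and> {y. \<forall>p\<in>P. p (y - x) < e} \<subseteq> \<Union>K"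
      using Pe by (intro exI[of _ P] exI[of _ e] conjI) auto
  qed
qed

lemma openin_semtop:
  "openin (semtop A) U \<longleftrightarrow> (\<forall>x\<in>U. \<exists>P e. finite P \<and> P \<subseteq> A \<and> e > 0 \<and> {y. \<forall>p\<in>P. p (y - x) < e} \<subseteq> U)"
  unfolding semtop_def by (simp only: topology_inverse'[OF istopology_semtop])

lemma topspace_semtop [simp]: "topspace (semtop A) = UNIV"
proof -
  have "openin (semtop A) UNIV" unfolding openin_semtop
    by (intro ballI exI[of _ "{}"] exI[of _ 1]) simp
  then show ?thesis using openin_subset by blast
qed



lemma hlcs_vs: "hlcs s A \<Longrightarrow> vector_space s"
  by (simp add: hlcs_def)
lemma hlcs_sn: "hlcs s A \<Longrightarrow> p \<in> A \<Longrightarrow> seminorm s p"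
  by (simp add: hlcs_def)

lemma semtop_ball_open:
  assumes "hlcs s A" "p \<in> A"
  shows "openin (semtop A) {y. p (y - z) < e}"
  unfolding openin_semtop
proof
  fix x assume x: "x \<in> {y. p (y - z) < e}"
  have vs: "vector_space s" and sn: "seminorm s p" using assms hlcs_vs hlcs_sn by auto
  show "\<exists>P e'. finite P \<and> P \<subseteq> A \<and> e' > 0 \<and> {y. \<forall>p\<in>P. p (y - x) < e'} \<subseteq> {y. p (y - z) < e}"
  proof (intro exI[of _ "{p}"] exI[of _ "e - p (x - z)"] conjI)
    show "finite {p}" "{p} \<subseteq> A" "e - p (x - z) > 0" using x assms by auto
    show "{y. \<forall>q\<in>{p}. q (y - x) < e - p (x - z)} \<subseteq> {y. p (y - z) < e}"
    proof
      fix y assume "y \<in> {y. \<forall>q\<in>{p}. q (y - x) < e - p (x - z)}"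
      then have "p (y - x) < e - p (x - z)" by simp
      then show "y \<in> {y. p (y - z) < e}" using sn_diff_tri[OF vs sn, of y z x] by simp
    qed
  qed
qed

lemma cont_semtopD:
  assumes "hlcs s A" "continuous_map X (semtop A) f" "x \<in> topspace X" "p \<in> A" "e > 0"
  shows "\<exists>N. openin X N \<and> x \<in> N \<and> (\<forall>y\<in>N. p (f y - f x) < e)"
proof (intro exI conjI ballI)
  show "openin X {y \<in> topspace X. f y \<in> {y. p (y - f x) < e}}"
    using openin_continuous_map_preimage[OF assms(2) semtop_ball_open[OF assms(1,4)]] .
  have "p 0 = 0" using sn_zero[OF hlcs_vs[OF assms(1)] hlcs_sn[OF assms(1,4)]] .
  then show "x \<in> {y \<in> topspace X. f y \<in> {y. p (y - f x) < e}}"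
    using assms(3,5) by simp
  fix y assume "y \<in> {y \<in> topspace X. f y \<in> {y. p (y - f x) < e}}"
  then show "p (f y - f x) < e" by simp
qed

lemma cont_semtopI:
  assumes "\<And>x p e. x \<in> topspace X \<Longrightarrow> p \<in> A \<Longrightarrow> e > 0 \<Longrightarrow>
             \<exists>N. openin X N \<and> x \<in> N \<and> (\<forall>y\<in>N. p (f y - f x) < e)"
  shows "continuous_map X (semtop A) f"
  unfolding continuous_map_def
proof (intro conjI allI impI)
  show "f \<in> topspace X \<rightarrow> topspace (semtop A)" by simp
  fix U assume U: "openin (semtop A) U"
  show "openin X {x \<in> topspace X. f x \<in> U}"
  proof (subst openin_subopen, intro ballI)
    fix x assume x: "x \<in> {x \<in> topspace X. f x \<in> U}"
    have "f x \<in> U" using x by simp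
    then have "\<exists>P e. finite P \<and> P \<subseteq> A \<and> e > 0 \<and> {y. \<forall>p\<in>P. p (y - f x) < e} \<subseteq> U"
      using U unfolding openin_semtop by (rule bspec[rotated])
    then obtain P e where P: "finite P" "P \<subseteq> A" "e > 0" "{y. \<forall>p\<in>P. p (y - f x) < e} \<subseteq> U"
      by (elim exE conjE)
    have "\<forall>p\<in>P. \<exists>N. openin X N \<and> x \<in> N \<and> (\<forall>y\<in>N. p (f y - f x) < e)"
    proof
      fix p assume "p \<in> P"
      then have "p \<in> A" by (rule subsetD[OF P(2)])
      moreover have "x \<in> topspace X" using x by simp
      ultimately show "\<exists>N. openin X N \<and> x \<in> N \<and> (\<forall>y\<in>N. p (f y - f x) < e)"
        using assms P(3) by blast
    qed
    from bchoice[OF this] obtain N where N0: "\<forall>p\<in>P. openin X (N p) \<and> x \<in> N p \<and> (\<forall>y\<in>N p. p (f y - f x) < e)"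
      by (elim exE)
    then have N: "\<And>p. p \<in> P \<Longrightarrow> openin X (N p) \<and> x \<in> N p \<and> (\<forall>y\<in>N p. p (f y - f x) < e)"
      by (rule bspec)
    show "\<exists>T. openin X T \<and> x \<in> T \<and> T \<subseteq> {x \<in> topspace X. f x \<in> U}"
    proof (intro exI conjI)
      show "openin X (topspace X \<inter> \<Inter> (N ` P))"
        using N P(1) by (intro openin_Int_Inter) auto
      show "x \<in> topspace X \<inter> \<Inter> (N ` P)" using N x by simp
      show "topspace X \<inter> \<Inter> (N ` P) \<subseteq> {x \<in> topspace X. f x \<in> U}"
      proof
        fix y assume y: "y \<in> topspace X \<inter> \<Inter> (N ` P)"
        have "\<forall>p\<in>P. p (f y - f x) < e"
        proof
          fix p assume p: "p \<in> P"
          then have "y \<in> N p" using y by simp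
          then show "p (f y - f x) < e" using N[OF p] by simp
        qed
        then have "f y \<in> U" using P(4) by blast
        then show "y \<in> {x \<in> topspace X. f x \<in> U}" using y by simp
      qed
    qed
  qed
qed

lemma cont_semtop_sumD:
  assumes "hlcs s A" "continuous_map X (semtop A) f" "x \<in> topspace X" "finite P" "P \<subseteq> A" "e > 0"
  shows "\<exists>N. openin X N \<and> x \<in> N \<and> (\<forall>y\<in>N. (\<Sum>p\<in>P. p (f y - f x)) < e)"
proof -
  define d where "d = e / (real (card P) + 1)"
  have d: "d > 0" using assms by (simp add: d_def)
  have "\<forall>p\<in>P. \<exists>N. openin X N \<and> x \<in> N \<and> (\<forall>y\<in>N. p (f y - f x) < d)"
  proof
    fix p assume "p \<in> P"
    then have "p \<in> A" by (rule subsetD[OF assms(5)])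
    then show "\<exists>N. openin X N \<and> x \<in> N \<and> (\<forall>y\<in>N. p (f y - f x) < d)"
      by (rule cont_semtopD[OF assms(1,2,3) _ d])
  qed
  from bchoice[OF this] obtain N where N0: "\<forall>p\<in>P. openin X (N p) \<and> x \<in> N p \<and> (\<forall>y\<in>N p. p (f y - f x) < d)"
    by (elim exE)
  then have N: "\<And>p. p \<in> P \<Longrightarrow> openin X (N p) \<and> x \<in> N p \<and> (\<forall>y\<in>N p. p (f y - f x) < d)"
    by (rule bspec)
  show ?thesis
  proof (intro exI conjI ballI)
    show "openin X (topspace X \<inter> \<Inter> (N ` P))"
      using N assms(4) by (intro openin_Int_Inter) auto
    show "x \<in> topspace X \<inter> \<Inter> (N ` P)" using N assms(3) by simp
    fix y assume y: "y \<in> topspace X \<inter> \<Inter> (N ` P)"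
    have "(\<Sum>p\<in>P. p (f y - f x)) \<le> (\<Sum>p\<in>P. d)"
    proof (rule sum_mono)
      fix p assume p: "p \<in> P"
      then have "y \<in> N p" using y by simp
      then show "p (f y - f x) \<le> d" using N[OF p] by (simp add: less_imp_le)
    qed
    also have "\<dots> = real (card P) * d" by simp
    also have "\<dots> < e" using d assms(6) unfolding d_def by (simp add: field_simps)
    finally show "(\<Sum>p\<in>P. p (f y - f x)) < e" .
  qed
qed



context
  fixes sX :: "complex \<Rightarrow> 'x::ab_group_add \<Rightarrow> 'x"
    and sY :: "complex \<Rightarrow> 'y::ab_group_add \<Rightarrow> 'y"
    and sZ :: "complex \<Rightarrow> 'z::ab_group_add \<Rightarrow> 'z"
    and tp :: "'x \<Rightarrow> 'y \<Rightarrow> 'z"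
  assumes tensor: "alg_tensor sX sY sZ tp"
begin

lemma tp_linL: "Vector_Spaces.linear sX sZ (\<lambda>x. tp x y)"
  using tensor by (simp add: alg_tensor_def)
lemma tp_linR: "Vector_Spaces.linear sY sZ (\<lambda>y. tp x y)"
  using tensor by (simp add: alg_tensor_def)

lemma tp_addL: "tp (x + x') y = tp x y + tp x' y"
  using tp_linL[of y] by (simp add: Vector_Spaces.linear_iff)
lemma tp_addR: "tp x (y + y') = tp x y + tp x y'"
  using tp_linR[of x] by (simp add: Vector_Spaces.linear_iff)
lemma tp_scaleL: "tp (sX c x) y = sZ c (tp x y)"
  using tp_linL[of y] by (simp add: Vector_Spaces.linear_iff)
lemma tp_scaleR: "tp x (sY c y) = sZ c (tp x y)"
  using tp_linR[of x] by (simp add: Vector_Spaces.linear_iff)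
lemma vsX: "vector_space sX" using tp_linL[of undefined] by (simp add: Vector_Spaces.linear_iff)
lemma vsY: "vector_space sY" using tp_linR[of undefined] by (simp add: Vector_Spaces.linear_iff)
lemma vsZ: "vector_space sZ" using tp_linR[of undefined] by (simp add: Vector_Spaces.linear_iff)

lemma tp_zeroL: "tp 0 y = 0"
proof -
  interpret X: module sX using vsX by (rule vs_module)
  interpret Z: module sZ using vsZ by (rule vs_module)
  have "tp 0 y = tp (sX 0 0) y" by (simp only: X.scale_zero_left)
  also have "\<dots> = 0" by (simp only: tp_scaleL Z.scale_zero_left)
  finally show ?thesis .
qed

lemma tp_zeroR: "tp x 0 = 0"
proof -
  interpret Y: module sY using vsY by (rule vs_module)
  interpret Z: module sZ using vsZ by (rule vs_module)
  have "tp x 0 = tp x (sY 0 0)" by (simp only: Y.scale_zero_left)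
  also have "\<dots> = 0" by (simp only: tp_scaleR Z.scale_zero_left)
  finally show ?thesis .
qed

lemma tp_scale2: "tp (sX a x) (sY b y) = sZ (a * b) (tp x y)"
proof -
  interpret Z: module sZ using vsZ by (rule vs_module)
  show ?thesis by (simp add: tp_scaleL tp_scaleR mult.commute)
qed

lemma tp_rep_finite:
  assumes "finite T" "T \<subseteq> {tp x y | x y. True}"
  shows "\<exists>n c xs ys. (\<Sum>a\<in>T. sZ (r a) a) = (\<Sum>k<(n::nat). sZ (c k) (tp (xs k) (ys k)))"
  using assms
proof (induction T rule: finite_induct)
  case empty
  show ?case by (intro exI[of _ 0]) simp
next
  case (insert a T)
  then have "T \<subseteq> {tp x y | x y. True}" by blast
  then obtain n c xs ys where IH: "(\<Sum>a\<in>T. sZ (r a) a) = (\<Sum>k<(n::nat). sZ (c k) (tp (xs k) (ys k)))"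
    using insert.IH by blast
  have "a \<in> {tp x y | x y. True}" using insert.prems by blast
  then obtain x y where a: "a = tp x y" by blast
  define c' where "c' = c(n := r a)"
  define xs' where "xs' = xs(n := x)"
  define ys' where "ys' = ys(n := y)"
  have eq: "(\<Sum>k<n. sZ (c' k) (tp (xs' k) (ys' k))) = (\<Sum>k<n. sZ (c k) (tp (xs k) (ys k)))"
    by (rule sum.cong) (auto simp: c'_def xs'_def ys'_def)
  have "(\<Sum>a\<in>insert a T. sZ (r a) a) = sZ (r a) a + (\<Sum>a\<in>T. sZ (r a) a)"
    using insert.hyps by (rule sum.insert)
  also have "\<dots> = (\<Sum>k<Suc n. sZ (c' k) (tp (xs' k) (ys' k)))"
    unfolding sum.lessThan_Suc eq IH by (simp add: c'_def xs'_def ys'_def a add.commute)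
  finally show ?case by blast
qed

lemma tp_rep: "\<exists>n c xs ys. z = (\<Sum>k<(n::nat). sZ (c k) (tp (xs k) (ys k)))"
proof -
  have "z \<in> module.span sZ {tp x y | x y. True}" using tensor by (simp add: alg_tensor_def)
  then obtain T r where "finite T" "T \<subseteq> {tp x y | x y. True}" "z = (\<Sum>a\<in>T. sZ (r a) a)"
    using module.span_explicit[OF vs_module[OF vsZ]] by blast
  then show ?thesis using tp_rep_finite[of T r] by auto
qed

end



lemma sum_lessThan_add_nat: "(\<Sum>k<m+n. h k) = (\<Sum>k<(m::nat). h k) + (\<Sum>k<n. h (m + k))"
  by (induction n) (simp_all add: add.assoc)

lemma ts_elim:
  assumes "w \<in> tensor_span sZ tp W V"
  obtains n c f g where "w = (\<lambda>u. \<Sum>k<(n::nat). sZ (c k) (tensor_fun tp (f k) (g k) u))"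
    "\<forall>k<n. f k \<in> W \<and> g k \<in> V"
  using assms unfolding tensor_span_def by blast

lemma ts_intro:
  assumes "\<forall>k<n. f k \<in> W \<and> g k \<in> V"
  shows "(\<lambda>u. \<Sum>k<(n::nat). sZ (c k) (tensor_fun tp (f k) (g k) u)) \<in> tensor_span sZ tp W V"
  unfolding tensor_span_def using assms by blast

lemma ts_zero: "(\<lambda>u. 0) \<in> tensor_span sZ tp W V"
  using ts_intro[of 0 f W g V sZ c tp] by simp

lemma ts_single:
  assumes "f \<in> W" "g \<in> V"
  shows "(\<lambda>u. sZ c (tensor_fun tp f g u)) \<in> tensor_span sZ tp W V"
  using ts_intro[of 1 "\<lambda>_. f" W "\<lambda>_. g" V sZ "\<lambda>_. c" tp] assms by simp

lemma ts_add:
  assumes "w1 \<in> tensor_span sZ tp W V" "w2 \<in> tensor_span sZ tp W V"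
  shows "(\<lambda>u. w1 u + w2 u) \<in> tensor_span sZ tp W V"
proof -
  obtain n1 c1 f1 g1 where w1: "w1 = (\<lambda>u. \<Sum>k<(n1::nat). sZ (c1 k) (tensor_fun tp (f1 k) (g1 k) u))"
    "\<forall>k<n1. f1 k \<in> W \<and> g1 k \<in> V" using assms(1) by (rule ts_elim)
  obtain n2 c2 f2 g2 where w2: "w2 = (\<lambda>u. \<Sum>k<(n2::nat). sZ (c2 k) (tensor_fun tp (f2 k) (g2 k) u))"
    "\<forall>k<n2. f2 k \<in> W \<and> g2 k \<in> V" using assms(2) by (rule ts_elim)
  define c where "c k = (if k < n1 then c1 k else c2 (k - n1))" for k
  define f where "f k = (if k < n1 then f1 k else f2 (k - n1))" for k
  define g where "g k = (if k < n1 then g1 k else g2 (k - n1))" for k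
  have mem: "\<forall>k<n1+n2. f k \<in> W \<and> g k \<in> V"
    using w1(2) w2(2) unfolding f_def g_def by auto
  have "(\<lambda>u. w1 u + w2 u) = (\<lambda>u. \<Sum>k<n1+n2. sZ (c k) (tensor_fun tp (f k) (g k) u))"
  proof
    fix u
    have "(\<Sum>k<n1+n2. sZ (c k) (tensor_fun tp (f k) (g k) u)) =
          (\<Sum>k<n1. sZ (c k) (tensor_fun tp (f k) (g k) u)) + (\<Sum>k<n2. sZ (c (n1+k)) (tensor_fun tp (f (n1+k)) (g (n1+k)) u))"
      by (rule sum_lessThan_add_nat)
    also have "(\<Sum>k<n1. sZ (c k) (tensor_fun tp (f k) (g k) u)) = w1 u"
      unfolding w1(1) by (rule sum.cong) (simp_all add: c_def f_def g_def)
    also have "(\<Sum>k<n2. sZ (c (n1+k)) (tensor_fun tp (f (n1+k)) (g (n1+k)) u)) = w2 u"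
      unfolding w2(1) by (rule sum.cong) (simp_all add: c_def f_def g_def)
    finally show "w1 u + w2 u = (\<Sum>k<n1+n2. sZ (c k) (tensor_fun tp (f k) (g k) u))" by simp
  qed
  then show ?thesis using ts_intro[OF mem, of sZ c tp] by simp
qed

lemma ts_sum:
  assumes "finite T" "\<And>i. i \<in> T \<Longrightarrow> w i \<in> tensor_span sZ tp W V"
  shows "(\<lambda>u. \<Sum>i\<in>T. w i u) \<in> tensor_span sZ tp W V"
  using assms
proof (induction T rule: finite_induct)
  case empty
  then show ?case using ts_zero by simp
next
  case (insert a T)
  have "(\<lambda>u. \<Sum>i\<in>insert a T. w i u) = (\<lambda>u. w a u + (\<Sum>i\<in>T. w i u))"
    using insert.hyps by simp
  also have "\<dots> \<in> tensor_span sZ tp W V"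
    using insert by (intro ts_add) auto
  finally show ?case .
qed

lemma ts_mono:
  assumes "W \<subseteq> W'" "V \<subseteq> V'"
  shows "tensor_span sZ tp W V \<subseteq> tensor_span sZ tp W' V'"
proof
  fix w assume "w \<in> tensor_span sZ tp W V"
  then obtain n c f g where w: "w = (\<lambda>u. \<Sum>k<(n::nat). sZ (c k) (tensor_fun tp (f k) (g k) u))"
    "\<forall>k<n. f k \<in> W \<and> g k \<in> V" by (rule ts_elim)
  have "\<forall>k<n. f k \<in> W' \<and> g k \<in> V'" using w(2) assms by blast
  then show "w \<in> tensor_span sZ tp W' V'" unfolding w(1) by (rule ts_intro)
qed

lemma ts_subset:
  assumes zero: "(\<lambda>u. 0) \<in> S"
    and add: "\<And>a b. a \<in> S \<Longrightarrow> b \<in> S \<Longrightarrow> (\<lambda>u. a u + b u) \<in> S"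
    and scale: "\<And>c a. a \<in> S \<Longrightarrow> (\<lambda>u. sZ c (a u)) \<in> S"
    and tens: "\<And>f g. f \<in> W \<Longrightarrow> g \<in> V \<Longrightarrow> tensor_fun tp f g \<in> S"
  shows "tensor_span sZ tp W V \<subseteq> S"
proof
  fix w assume "w \<in> tensor_span sZ tp W V"
  then obtain n c f g where w: "w = (\<lambda>u. \<Sum>k<(n::nat). sZ (c k) (tensor_fun tp (f k) (g k) u))"
    "\<forall>k<n. f k \<in> W \<and> g k \<in> V" by (rule ts_elim)
  have "\<forall>m\<le>n. (\<lambda>u. \<Sum>k<m. sZ (c k) (tensor_fun tp (f k) (g k) u)) \<in> S"
  proof (intro allI impI)
    fix m assume "m \<le> n"
    then show "(\<lambda>u. \<Sum>k<m. sZ (c k) (tensor_fun tp (f k) (g k) u)) \<in> S"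
    proof (induction m)
      case 0
      then show ?case using zero by simp
    next
      case (Suc m)
      then have IH: "(\<lambda>u. \<Sum>k<m. sZ (c k) (tensor_fun tp (f k) (g k) u)) \<in> S" by simp
      have "m < n" using Suc.prems by simp
      then have "tensor_fun tp (f m) (g m) \<in> S" using w(2) tens by simp
      then have "(\<lambda>u. sZ (c m) (tensor_fun tp (f m) (g m) u)) \<in> S" by (rule scale)
      from add[OF IH this] show ?case by simp
    qed
  qed
  then show "w \<in> S" using w(1) by simp
qed



lemma CfunD:
  assumes "f \<in> Cfun X A"
  shows "continuous_map X (semtop A) f" "\<And>x. x \<notin> topspace X \<Longrightarrow> f x = 0"
  using assms unfolding Cfun_def by auto

lemma CfunI:
  assumes "continuous_map X (semtop A) f" "\<And>x. x \<notin> topspace X \<Longrightarrow> f x = 0"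
  shows "f \<in> Cfun X A"
  using assms unfolding Cfun_def by auto

lemma Cfun_zero: "(\<lambda>u. 0) \<in> Cfun X A"
proof (rule CfunI)
  show "continuous_map X (semtop A) (\<lambda>u. 0)" by simp
qed simp

lemma Cfun_add:
  assumes A: "hlcs s A" and f: "f \<in> Cfun X A" and g: "g \<in> Cfun X A"
  shows "(\<lambda>u. f u + g u) \<in> Cfun X A"
proof (rule CfunI)
  show "continuous_map X (semtop A) (\<lambda>u. f u + g u)"
  proof (rule cont_semtopI)
    fix x p e assume x: "x \<in> topspace X" and p: "p \<in> A" and e: "(e::real) > 0"
    have e2: "e / 2 > 0" using e by simp
    obtain N1 where N1: "openin X N1" "x \<in> N1" "\<forall>y\<in>N1. p (f y - f x) < e / 2"
      using cont_semtopD[OF A CfunD(1)[OF f] x p e2] by (elim exE conjE)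
    obtain N2 where N2: "openin X N2" "x \<in> N2" "\<forall>y\<in>N2. p (g y - g x) < e / 2"
      using cont_semtopD[OF A CfunD(1)[OF g] x p e2] by (elim exE conjE)
    show "\<exists>N. openin X N \<and> x \<in> N \<and> (\<forall>y\<in>N. p (f y + g y - (f x + g x)) < e)"
    proof (intro exI[of _ "N1 \<inter> N2"] conjI ballI)
      show "openin X (N1 \<inter> N2)" using N1 N2 by (simp add: openin_Int)
      show "x \<in> N1 \<inter> N2" using N1 N2 by simp
      fix y assume y: "y \<in> N1 \<inter> N2"
      have eq: "f y + g y - (f x + g x) = (f y - f x) + (g y - g x)" by (simp add: algebra_simps)
      have "p (f y + g y - (f x + g x)) \<le> p (f y - f x) + p (g y - g x)"
        by (subst eq) (rule sn_add[OF hlcs_vs[OF A] hlcs_sn[OF A p]])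
      moreover have "p (f y - f x) < e / 2" "p (g y - g x) < e / 2" using y N1 N2 by auto
      ultimately show "p (f y + g y - (f x + g x)) < e" by linarith
    qed
  qed
next
  fix x assume "x \<notin> topspace X"
  then show "f x + g x = 0" using CfunD(2)[OF f] CfunD(2)[OF g] by simp
qed

lemma Cfun_scale:
  assumes A: "hlcs s A" and f: "f \<in> Cfun X A"
  shows "(\<lambda>u. s c (f u)) \<in> Cfun X A"
proof (rule CfunI)
  interpret M: module s using hlcs_vs[OF A] by (rule vs_module)
  show "continuous_map X (semtop A) (\<lambda>u. s c (f u))"
  proof (rule cont_semtopI)
    fix x p e assume x: "x \<in> topspace X" and p: "p \<in> A" and e: "(e::real) > 0"
    have e2: "e / (cmod c + 1) > 0" using e norm_ge_zero[of c] by (intro divide_pos_pos) linarith+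
    obtain N1 where N1: "openin X N1" "x \<in> N1" "\<forall>y\<in>N1. p (f y - f x) < e / (cmod c + 1)"
      using cont_semtopD[OF A CfunD(1)[OF f] x p e2] by (elim exE conjE)
    show "\<exists>N. openin X N \<and> x \<in> N \<and> (\<forall>y\<in>N. p (s c (f y) - s c (f x)) < e)"
    proof (intro exI[of _ N1] conjI ballI)
      show "openin X N1" "x \<in> N1" using N1 by auto
      fix y assume y: "y \<in> N1"
      have eq: "p (s c (f y) - s c (f x)) = cmod c * p (f y - f x)"
        using sn_scale[OF hlcs_vs[OF A] hlcs_sn[OF A p], of c "f y - f x"]
        by (simp add: M.scale_right_diff_distrib)
      have h: "p (f y - f x) < e / (cmod c + 1)" using y N1 by auto
      have "cmod c * p (f y - f x) \<le> cmod c * (e / (cmod c + 1))"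
        using h by (intro mult_left_mono) auto
      also have "\<dots> = (cmod c * e) / (cmod c + 1)" by simp
      also have "\<dots> < e"
      proof -
        have pos: "cmod c + 1 > 0" using norm_ge_zero[of c] by linarith
        have "cmod c * e < e * (cmod c + 1)" using e by (simp add: algebra_simps)
        then show ?thesis using pos by (simp add: pos_divide_less_eq)
      qed
      finally show "p (s c (f y) - s c (f x)) < e" using eq by simp
    qed
  qed
next
  interpret M: module s using hlcs_vs[OF A] by (rule vs_module)
  fix x assume "x \<notin> topspace X"
  then show "s c (f x) = 0" using CfunD(2)[OF f] by simp
qed

lemma Cfun_tensor:
  assumes tensor: "alg_tensor sX sY sZ tp"
    and cont: "continuous_map (prod_topology (semtop AX) (semtop AY)) (semtop AZ) (\<lambda>(x, y). tp x y)"
    and f: "f \<in> Cfun I AX" and g: "g \<in> Cfun J AY"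
  shows "tensor_fun tp f g \<in> Cfun (prod_topology I J) AZ"
proof (rule CfunI)
  have c1: "continuous_map (prod_topology I J) (prod_topology (semtop AX) (semtop AY)) (\<lambda>(t, s). (f t, g s))"
    using CfunD(1)[OF f] CfunD(1)[OF g] by (simp add: continuous_map_prod_top)
  have eq: "tensor_fun tp f g = (\<lambda>(x, y). tp x y) \<circ> (\<lambda>(t, s). (f t, g s))"
    by (simp add: tensor_fun_def fun_eq_iff)
  show "continuous_map (prod_topology I J) (semtop AZ) (tensor_fun tp f g)"
    unfolding eq using c1 cont by (rule continuous_map_compose)
next
  fix u assume u: "u \<notin> topspace (prod_topology I J)"
  obtain t s where ts: "u = (t, s)" by (cases u)
  then have "t \<notin> topspace I \<or> s \<notin> topspace J" using u by simp
  then have "f t = 0 \<or> g s = 0" using CfunD(2)[OF f] CfunD(2)[OF g] by blast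
  then show "tensor_fun tp f g u = 0"
    unfolding ts tensor_fun_def using tp_zeroL[OF tensor] tp_zeroR[OF tensor] by auto
qed

lemma ts_Cfun:
  assumes Z: "hlcs sZ AZ" and tensor: "alg_tensor sX sY sZ tp"
    and cont: "continuous_map (prod_topology (semtop AX) (semtop AY)) (semtop AZ) (\<lambda>(x, y). tp x y)"
  shows "tensor_span sZ tp (Cfun I AX) (Cfun J AY) \<subseteq> Cfun (prod_topology I J) AZ"
proof (rule ts_subset)
  show "(\<lambda>u. 0) \<in> Cfun (prod_topology I J) AZ" by (rule Cfun_zero)
  show "\<And>a b. a \<in> Cfun (prod_topology I J) AZ \<Longrightarrow> b \<in> Cfun (prod_topology I J) AZ \<Longrightarrow>
    (\<lambda>u. a u + b u) \<in> Cfun (prod_topology I J) AZ" using Cfun_add[OF Z] by blast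
  show "\<And>c a. a \<in> Cfun (prod_topology I J) AZ \<Longrightarrow> (\<lambda>u. sZ c (a u)) \<in> Cfun (prod_topology I J) AZ"
    using Cfun_scale[OF Z] by blast
  show "\<And>f g. f \<in> Cfun I AX \<Longrightarrow> g \<in> Cfun J AY \<Longrightarrow> tensor_fun tp f g \<in> Cfun (prod_topology I J) AZ"
    using Cfun_tensor[OF tensor cont] by blast
qed



lemma compact_bound:
  assumes C: "compactin X C" and H: "\<forall>x\<in>C. \<exists>N. openin X N \<and> x \<in> N \<and> (\<forall>y\<in>N. h y \<le> h x + (1::real))"
  shows "\<exists>M. \<forall>y\<in>C. h y \<le> M"
proof -
  from bchoice[OF H] obtain N where N: "\<forall>x\<in>C. openin X (N x) \<and> x \<in> N x \<and> (\<forall>y\<in>N x. h y \<le> h x + 1)"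
    by (elim exE)
  have o1: "\<forall>B\<in>N ` C. openin X B" using N by blast
  have o2: "C \<subseteq> \<Union>(N ` C)" using N by blast
  have cd: "\<forall>U. (\<forall>B\<in>U. openin X B) \<and> C \<subseteq> \<Union>U \<longrightarrow> (\<exists>F. finite F \<and> F \<subseteq> U \<and> C \<subseteq> \<Union>F)"
    using C unfolding compactin_def by (rule conjunct2)
  have "\<exists>F. finite F \<and> F \<subseteq> N ` C \<and> C \<subseteq> \<Union>F" using cd[rule_format, OF conjI[OF o1 o2]] .
  then obtain F where F: "finite F" "F \<subseteq> N ` C" "C \<subseteq> \<Union>F" by (elim exE conjE)
  have "\<exists>C0\<subseteq>C. finite C0 \<and> F = N ` C0" using finite_subset_image[OF F(1) F(2)] .
  then obtain C0 where C0: "C0 \<subseteq> C" "finite C0" "F = N ` C0" by (elim exE conjE)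
  show ?thesis
  proof (intro exI[of _ "(\<Sum>x\<in>C0. \<bar>h x\<bar>) + 1"] ballI)
    fix y assume y: "y \<in> C"
    then have "y \<in> \<Union>(N ` C0)" using F(3) C0(3) by blast
    then obtain x0 where x0: "x0 \<in> C0" "y \<in> N x0" by blast
    have "x0 \<in> C" using x0 C0 by blast
    then have "h y \<le> h x0 + 1" using N x0 by blast
    also have "h x0 \<le> \<bar>h x0\<bar>" by simp
    also have "\<bar>h x0\<bar> \<le> (\<Sum>x\<in>C0. \<bar>h x\<bar>)" using x0(1) C0(2) by (intro member_le_sum) auto
    finally show "h y \<le> (\<Sum>x\<in>C0. \<bar>h x\<bar>) + 1" by simp
  qed
qed

lemma vanish_iff:
  assumes "Hausdorff_space X"
  shows "vanishes_at_infinity X A g \<longleftrightarrow>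
    (\<forall>p\<in>A. \<forall>e>0. \<exists>C. compactin X C \<and> (\<forall>x\<in>topspace X - C. p (g x) < e))"
proof
  assume V: "vanishes_at_infinity X A g"
  show "\<forall>p\<in>A. \<forall>e>0. \<exists>C. compactin X C \<and> (\<forall>x\<in>topspace X - C. p (g x) < e)"
  proof (intro ballI allI impI)
    fix p e assume p: "p \<in> A" and e: "(e::real) > 0"
    let ?S = "{x \<in> topspace X. p (g x) \<ge> e}"
    show "\<exists>C. compactin X C \<and> (\<forall>x\<in>topspace X - C. p (g x) < e)"
    proof (intro exI[of _ "X closure_of ?S"] conjI ballI)
      show "compactin X (X closure_of ?S)" using V p e unfolding vanishes_at_infinity_def by blast
      fix x assume x: "x \<in> topspace X - X closure_of ?S"
      have "?S \<subseteq> X closure_of ?S" by (rule closure_of_subset) auto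
      then have "x \<notin> ?S" using x by blast
      then show "p (g x) < e" using x by auto
    qed
  qed
next
  assume R: "\<forall>p\<in>A. \<forall>e>0. \<exists>C. compactin X C \<and> (\<forall>x\<in>topspace X - C. p (g x) < e)"
  show "vanishes_at_infinity X A g"
    unfolding vanishes_at_infinity_def
  proof (intro ballI allI impI)
    fix p e assume p: "p \<in> A" and e: "(e::real) > 0"
    have "\<exists>C. compactin X C \<and> (\<forall>x\<in>topspace X - C. p (g x) < e)" using R p e by blast
    then obtain C where C: "compactin X C" "\<forall>x\<in>topspace X - C. p (g x) < e" by (elim exE conjE)
    have sub: "{x \<in> topspace X. e \<le> p (g x)} \<subseteq> C" using C(2) by force
    have "closedin X C" using compactin_imp_closedin[OF assms C(1)] .
    then have "X closure_of {x \<in> topspace X. e \<le> p (g x)} \<subseteq> C" using sub by (intro closure_of_minimal)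
    then show "compactin X (X closure_of {x \<in> topspace X. e \<le> p (g x)})"
      using closed_compactin[OF C(1)] by simp
  qed
qed

definition van :: "'a topology \<Rightarrow> ('z \<Rightarrow> real) set \<Rightarrow> ('a \<Rightarrow> 'z) \<Rightarrow> bool" where
  "van X A g \<longleftrightarrow> (\<forall>p\<in>A. \<forall>e>0. \<exists>C. compactin X C \<and> (\<forall>x\<in>topspace X - C. p (g x) < e))"

lemma vanD:
  assumes "van X A g" "p \<in> A" "e > 0"
  obtains C where "compactin X C" "\<And>x. x \<in> topspace X \<Longrightarrow> x \<notin> C \<Longrightarrow> p (g x) < e"
proof -
  have "\<exists>C. compactin X C \<and> (\<forall>x\<in>topspace X - C. p (g x) < e)" using assms unfolding van_def by blast
  then obtain C where "compactin X C" "\<forall>x\<in>topspace X - C. p (g x) < e" by (elim exE conjE)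
  then show ?thesis using that by blast
qed

lemma C0fun_iff:
  assumes "Hausdorff_space X"
  shows "f \<in> C0fun X A \<longleftrightarrow> f \<in> Cfun X A \<and> van X A f"
  unfolding C0fun_def van_def vanish_iff[OF assms] by simp

lemma van_zero: "hlcs s A \<Longrightarrow> van X A (\<lambda>u. 0)"
  unfolding van_def
  by (intro ballI allI impI exI[of _ "{}"] conjI) (auto simp: sn_zero[OF hlcs_vs hlcs_sn])

lemma van_add:
  assumes A: "hlcs s A" and f: "van X A f" and g: "van X A g"
  shows "van X A (\<lambda>u. f u + g u)"
  unfolding van_def
proof (intro ballI allI impI)
  fix p e assume p: "p \<in> A" and e: "(e::real) > 0"
  have e2: "e / 2 > 0" using e by simp
  obtain C1 where C1: "compactin X C1" "\<And>x. x \<in> topspace X \<Longrightarrow> x \<notin> C1 \<Longrightarrow> p (f x) < e / 2"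
    using vanD[OF f p e2] by metis
  obtain C2 where C2: "compactin X C2" "\<And>x. x \<in> topspace X \<Longrightarrow> x \<notin> C2 \<Longrightarrow> p (g x) < e / 2"
    using vanD[OF g p e2] by metis
  show "\<exists>C. compactin X C \<and> (\<forall>x\<in>topspace X - C. p (f x + g x) < e)"
  proof (intro exI[of _ "C1 \<union> C2"] conjI ballI)
    show "compactin X (C1 \<union> C2)" using C1(1) C2(1) by (rule compactin_Un)
    fix x assume x: "x \<in> topspace X - (C1 \<union> C2)"
    have "p (f x + g x) \<le> p (f x) + p (g x)" by (rule sn_add[OF hlcs_vs[OF A] hlcs_sn[OF A p]])
    moreover have "p (f x) < e / 2" "p (g x) < e / 2" using x C1(2) C2(2) by auto
    ultimately show "p (f x + g x) < e" by linarith
  qed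
qed

lemma van_scale:
  assumes A: "hlcs s A" and f: "van X A f"
  shows "van X A (\<lambda>u. s c (f u))"
  unfolding van_def
proof (intro ballI allI impI)
  fix p e assume p: "p \<in> A" and e: "(e::real) > 0"
  have pos: "cmod c + 1 > 0" using norm_ge_zero[of c] by linarith
  have e2: "e / (cmod c + 1) > 0" using e pos by simp
  obtain C1 where C1: "compactin X C1" "\<And>x. x \<in> topspace X \<Longrightarrow> x \<notin> C1 \<Longrightarrow> p (f x) < e / (cmod c + 1)"
    using vanD[OF f p e2] by metis
  show "\<exists>C. compactin X C \<and> (\<forall>x\<in>topspace X - C. p (s c (f x)) < e)"
  proof (intro exI[of _ C1] conjI ballI)
    show "compactin X C1" by fact
    fix x assume x: "x \<in> topspace X - C1"
    have h: "p (f x) < e / (cmod c + 1)" using x C1(2) by auto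
    have "p (s c (f x)) = cmod c * p (f x)" by (rule sn_scale[OF hlcs_vs[OF A] hlcs_sn[OF A p]])
    also have "\<dots> \<le> cmod c * (e / (cmod c + 1))" using h by (intro mult_left_mono) auto
    also have "\<dots> = (cmod c * e) / (cmod c + 1)" by simp
    also have "\<dots> < e"
    proof -
      have "cmod c * e < e * (cmod c + 1)" using e by (simp add: algebra_simps)
      then show ?thesis using pos by (simp add: pos_divide_less_eq)
    qed
    finally show "p (s c (f x)) < e" .
  qed
qed

lemma C0_bounded:
  assumes A: "hlcs s A" and f: "f \<in> Cfun X A" and v: "van X A f" and p: "p \<in> A"
  shows "\<exists>M. \<forall>x\<in>topspace X. p (f x) \<le> M"
proof -
  obtain C where C: "compactin X C" "\<And>x. x \<in> topspace X \<Longrightarrow> x \<notin> C \<Longrightarrow> p (f x) < 1"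
    using vanD[OF v p, of 1] by auto
  have "\<forall>x\<in>C. \<exists>N. openin X N \<and> x \<in> N \<and> (\<forall>y\<in>N. p (f y) \<le> p (f x) + 1)"
  proof
    fix x assume "x \<in> C"
    then have x: "x \<in> topspace X" using compactin_subset_topspace[OF C(1)] by blast
    have "\<exists>N. openin X N \<and> x \<in> N \<and> (\<forall>y\<in>N. p (f y - f x) < 1)"
      by (rule cont_semtopD[OF A CfunD(1)[OF f] x p]) simp
    then obtain N where N: "openin X N" "x \<in> N" "\<forall>y\<in>N. p (f y - f x) < 1" by (elim exE conjE)
    show "\<exists>N. openin X N \<and> x \<in> N \<and> (\<forall>y\<in>N. p (f y) \<le> p (f x) + 1)"
    proof (intro exI[of _ N] conjI ballI)
      show "openin X N" "x \<in> N" by fact+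
      fix y assume "y \<in> N"
      then have "p (f y - f x) < 1" using N by blast
      moreover have "p (f y) \<le> p (f x) + p (f y - f x)" by (rule sn_sub_le[OF hlcs_vs[OF A] hlcs_sn[OF A p]])
      ultimately show "p (f y) \<le> p (f x) + 1" by linarith
    qed
  qed
  from compact_bound[OF C(1) this] obtain M where M: "\<forall>y\<in>C. p (f y) \<le> M" by (elim exE)
  show ?thesis
  proof (intro exI[of _ "max M 1"] ballI)
    fix x assume x: "x \<in> topspace X"
    show "p (f x) \<le> max M 1"
    proof (cases "x \<in> C")
      case True then show ?thesis using M by fastforce
    next
      case False then show ?thesis using C(2)[OF x] by fastforce
    qed
  qed
qed

lemma sum_bound:
  assumes "finite P" "\<forall>q\<in>P. \<exists>M. \<forall>x\<in>S. q (f x) \<le> (M::real)"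
  shows "\<exists>M. \<forall>x\<in>S. (\<Sum>q\<in>P. q (f x)) \<le> M"
  using assms
proof (induction P rule: finite_induct)
  case empty
  show ?case by (intro exI[of _ 0]) simp
next
  case (insert q P)
  have "\<exists>M. \<forall>x\<in>S. (\<Sum>q\<in>P. q (f x)) \<le> M" using insert.IH insert.prems by blast
  then obtain M1 where M1: "\<forall>x\<in>S. (\<Sum>q\<in>P. q (f x)) \<le> M1" by (elim exE)
  have "\<exists>M. \<forall>x\<in>S. q (f x) \<le> M" using insert.prems by blast
  then obtain M2 where M2: "\<forall>x\<in>S. q (f x) \<le> M2" by (elim exE)
  show ?case
  proof (intro exI[of _ "M1 + M2"] ballI)
    fix x assume x: "x \<in> S"
    have a: "(\<Sum>q\<in>P. q (f x)) \<le> M1" using M1 x by blast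
    have b: "q (f x) \<le> M2" using M2 x by blast
    have "(\<Sum>q\<in>insert q P. q (f x)) = q (f x) + (\<Sum>q\<in>P. q (f x))" using insert.hyps by simp
    then show "(\<Sum>q\<in>insert q P. q (f x)) \<le> M1 + M2" using a b by linarith
  qed
qed

lemma sum_van:
  assumes "finite P" "P \<subseteq> A" "van X A f" "e > 0"
  shows "\<exists>C. compactin X C \<and> (\<forall>x\<in>topspace X. x \<notin> C \<longrightarrow> (\<Sum>q\<in>P. q (f x)) < e)"
  using assms
proof (induction P arbitrary: e rule: finite_induct)
  case empty
  show ?case by (intro exI[of _ "{}"]) (simp add: empty.prems)
next
  case (insert q P)
  have e2: "e / 2 > 0" using insert.prems by simp
  have "\<exists>C. compactin X C \<and> (\<forall>x\<in>topspace X. x \<notin> C \<longrightarrow> (\<Sum>q\<in>P. q (f x)) < e / 2)"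
    using insert.IH[OF _ insert.prems(2) e2] insert.prems(1) by blast
  then obtain C1 where C1: "compactin X C1" "\<forall>x\<in>topspace X. x \<notin> C1 \<longrightarrow> (\<Sum>q\<in>P. q (f x)) < e / 2"
    by (elim exE conjE)
  have q: "q \<in> A" using insert.prems(1) by blast
  obtain C2 where C2: "compactin X C2" "\<And>x. x \<in> topspace X \<Longrightarrow> x \<notin> C2 \<Longrightarrow> q (f x) < e / 2"
    using vanD[OF insert.prems(2) q e2] by metis
  show ?case
  proof (intro exI[of _ "C1 \<union> C2"] conjI ballI impI)
    show "compactin X (C1 \<union> C2)" using C1(1) C2(1) by (rule compactin_Un)
    fix x assume x: "x \<in> topspace X" "x \<notin> C1 \<union> C2"
    have "(\<Sum>q\<in>P. q (f x)) < e / 2" "q (f x) < e / 2" using x C1(2) C2(2) by auto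
    then show "(\<Sum>q\<in>insert q P. q (f x)) < e" using insert.hyps by simp
  qed
qed



section \<open>Bilinear estimate\<close>

lemma bil:
  assumes X: "hlcs sX AX" and Y: "hlcs sY AY" and Z: "hlcs sZ AZ"
    and tensor: "alg_tensor sX sY sZ tp"
    and cont: "continuous_map (prod_topology (semtop AX) (semtop AY)) (semtop AZ) (\<lambda>(x, y). tp x y)"
    and p: "p \<in> AZ"
  shows "\<exists>P1 P2 d. finite P1 \<and> P1 \<subseteq> AX \<and> finite P2 \<and> P2 \<subseteq> AY \<and> d > 0 \<and>
    (\<forall>x y a b. a > 0 \<longrightarrow> b > 0 \<longrightarrow> (\<Sum>q\<in>P1. q x) < a * d \<longrightarrow> (\<Sum>q\<in>P2. q y) < b * d \<longrightarrow>
       p (tp x y) < a * b)"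
proof -
  interpret MX: module sX using hlcs_vs[OF X] by (rule vs_module)
  interpret MY: module sY using hlcs_vs[OF Y] by (rule vs_module)
  interpret MZ: module sZ using hlcs_vs[OF Z] by (rule vs_module)
  have snp: "seminorm sZ p" using hlcs_sn[OF Z p] .
  have vsZ: "vector_space sZ" using hlcs_vs[OF Z] .
  let ?U = "{z. p (z - 0) < 1}"
  let ?S = "{w \<in> topspace (prod_topology (semtop AX) (semtop AY)). (\<lambda>(x, y). tp x y) w \<in> ?U}"
  have Uo: "openin (semtop AZ) ?U" by (rule semtop_ball_open[OF Z p])
  have So: "openin (prod_topology (semtop AX) (semtop AY)) ?S"
    by (rule openin_continuous_map_preimage[OF cont Uo])
  have "tp 0 0 = 0" by (rule tp_zeroL[OF tensor])
  then have S00: "(0, 0) \<in> ?S" using sn_zero[OF vsZ snp] by simp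
  have "\<forall>x y. (x, y) \<in> ?S \<longrightarrow> (\<exists>U V. openin (semtop AX) U \<and> openin (semtop AY) V \<and> x \<in> U \<and> y \<in> V \<and> U \<times> V \<subseteq> ?S)"
    using iffD1[OF openin_prod_topology_alt So] .
  then have "\<exists>U V. openin (semtop AX) U \<and> openin (semtop AY) V \<and> 0 \<in> U \<and> 0 \<in> V \<and> U \<times> V \<subseteq> ?S"
    using S00 by blast
  then obtain U1 V1 where UV: "openin (semtop AX) U1" "openin (semtop AY) V1" "0 \<in> U1" "0 \<in> V1" "U1 \<times> V1 \<subseteq> ?S"
    by (elim exE conjE)
  have "\<exists>P e. finite P \<and> P \<subseteq> AX \<and> e > 0 \<and> {y. \<forall>p\<in>P. p (y - 0) < e} \<subseteq> U1"
    using UV(1) UV(3) unfolding openin_semtop by (rule bspec)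
  then obtain P1 e1 where P1: "finite P1" "P1 \<subseteq> AX" "e1 > 0" "{y. \<forall>p\<in>P1. p (y - 0) < e1} \<subseteq> U1"
    by (elim exE conjE)
  have "\<exists>P e. finite P \<and> P \<subseteq> AY \<and> e > 0 \<and> {y. \<forall>p\<in>P. p (y - 0) < e} \<subseteq> V1"
    using UV(2) UV(4) unfolding openin_semtop by (rule bspec)
  then obtain P2 e2 where P2: "finite P2" "P2 \<subseteq> AY" "e2 > 0" "{y. \<forall>p\<in>P2. p (y - 0) < e2} \<subseteq> V1"
    by (elim exE conjE)
  show ?thesis
  proof (intro exI[of _ P1] exI[of _ P2] exI[of _ "min e1 e2"] conjI allI impI)
    show "finite P1" "P1 \<subseteq> AX" "finite P2" "P2 \<subseteq> AY" "min e1 e2 > 0" using P1 P2 by auto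
    fix x y and a b :: real
    assume a: "a > 0" and b: "b > 0" and hx: "(\<Sum>q\<in>P1. q x) < a * min e1 e2"
      and hy: "(\<Sum>q\<in>P2. q y) < b * min e1 e2"
    define x' where "x' = sX (complex_of_real (1 / a)) x"
    define y' where "y' = sY (complex_of_real (1 / b)) y"
    have "\<forall>q\<in>P1. q (x' - 0) < e1"
    proof
      fix q assume q: "q \<in> P1"
      have snq: "seminorm sX q" using hlcs_sn[OF X] q P1(2) by blast
      have "q x \<le> (\<Sum>q\<in>P1. q x)"
        using sum_seminorm_ge[OF hlcs_vs[OF X] _ P1(1) q] hlcs_sn[OF X] P1(2) by blast
      also have "\<dots> < a * e1" using hx a by (smt (verit) min.cobounded1 mult_left_mono)
      finally have "q x < a * e1" .
      then have "q x / a < e1" using a by (simp add: pos_divide_less_eq mult.commute)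
      moreover have "q (x' - 0) = q x / a"
        unfolding x'_def using sn_scale_real[OF hlcs_vs[OF X] snq, of "1/a" x] a by simp
      ultimately show "q (x' - 0) < e1" by simp
    qed
    then have x'U: "x' \<in> U1" using P1(4) by blast
    have "\<forall>q\<in>P2. q (y' - 0) < e2"
    proof
      fix q assume q: "q \<in> P2"
      have snq: "seminorm sY q" using hlcs_sn[OF Y] q P2(2) by blast
      have "q y \<le> (\<Sum>q\<in>P2. q y)"
        using sum_seminorm_ge[OF hlcs_vs[OF Y] _ P2(1) q] hlcs_sn[OF Y] P2(2) by blast
      also have "\<dots> < b * e2" using hy b by (smt (verit) min.cobounded2 mult_left_mono)
      finally have "q y < b * e2" .
      then have "q y / b < e2" using b by (simp add: pos_divide_less_eq mult.commute)
      moreover have "q (y' - 0) = q y / b"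
        unfolding y'_def using sn_scale_real[OF hlcs_vs[OF Y] snq, of "1/b" y] b by simp
      ultimately show "q (y' - 0) < e2" by simp
    qed
    then have y'V: "y' \<in> V1" using P2(4) by blast
    have "(x', y') \<in> ?S" using UV(5) x'U y'V by blast
    then have lt1: "p (tp x' y') < 1" by simp
    have xx: "x = sX (complex_of_real a) x'" unfolding x'_def using a by simp
    have yy: "y = sY (complex_of_real b) y'" unfolding y'_def using b by simp
    have "tp x y = sZ (complex_of_real a * complex_of_real b) (tp x' y')"
      unfolding xx yy by (rule tp_scale2[OF tensor])
    then have "p (tp x y) = (a * b) * p (tp x' y')"
      using sn_scale[OF vsZ snp] a b by (simp add: norm_mult)
    also have "\<dots> < a * b" using lt1 a b by simp
    finally show "p (tp x y) < a * b" .
  qed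
qed



lemma Cbfun_iff: "f \<in> Cbfun X A \<longleftrightarrow> f \<in> Cfun X A \<and> (\<forall>p\<in>A. \<exists>C. \<forall>x\<in>topspace X. p (f x) \<le> C)"
  unfolding Cbfun_def by simp

lemma Cb_zero: "hlcs s A \<Longrightarrow> (\<lambda>u. 0) \<in> Cbfun X A"
  unfolding Cbfun_iff using Cfun_zero sn_zero[OF hlcs_vs hlcs_sn] by fastforce

lemma Cb_add:
  assumes A: "hlcs s A" and f: "f \<in> Cbfun X A" and g: "g \<in> Cbfun X A"
  shows "(\<lambda>u. f u + g u) \<in> Cbfun X A"
  unfolding Cbfun_iff
proof (intro conjI ballI)
  show "(\<lambda>u. f u + g u) \<in> Cfun X A" using Cfun_add[OF A] f g unfolding Cbfun_iff by blast
  fix p assume p: "p \<in> A"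
  have "\<exists>C. \<forall>x\<in>topspace X. p (f x) \<le> C" using f p unfolding Cbfun_iff by blast
  then obtain C1 where C1: "\<forall>x\<in>topspace X. p (f x) \<le> C1" by (elim exE)
  have "\<exists>C. \<forall>x\<in>topspace X. p (g x) \<le> C" using g p unfolding Cbfun_iff by blast
  then obtain C2 where C2: "\<forall>x\<in>topspace X. p (g x) \<le> C2" by (elim exE)
  show "\<exists>C. \<forall>x\<in>topspace X. p (f x + g x) \<le> C"
  proof (intro exI[of _ "C1 + C2"] ballI)
    fix x assume x: "x \<in> topspace X"
    have "p (f x + g x) \<le> p (f x) + p (g x)" by (rule sn_add[OF hlcs_vs[OF A] hlcs_sn[OF A p]])
    then show "p (f x + g x) \<le> C1 + C2" using C1 C2 x by fastforce
  qed
qed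

lemma Cb_scale:
  assumes A: "hlcs s A" and f: "f \<in> Cbfun X A"
  shows "(\<lambda>u. s c (f u)) \<in> Cbfun X A"
  unfolding Cbfun_iff
proof (intro conjI ballI)
  show "(\<lambda>u. s c (f u)) \<in> Cfun X A" using Cfun_scale[OF A] f unfolding Cbfun_iff by blast
  fix p assume p: "p \<in> A"
  have "\<exists>C. \<forall>x\<in>topspace X. p (f x) \<le> C" using f p unfolding Cbfun_iff by blast
  then obtain C1 where C1: "\<forall>x\<in>topspace X. p (f x) \<le> C1" by (elim exE)
  show "\<exists>C. \<forall>x\<in>topspace X. p (s c (f x)) \<le> C"
  proof (intro exI[of _ "cmod c * C1"] ballI)
    fix x assume x: "x \<in> topspace X"
    have "p (s c (f x)) = cmod c * p (f x)" by (rule sn_scale[OF hlcs_vs[OF A] hlcs_sn[OF A p]])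
    also have "\<dots> \<le> cmod c * C1" using C1 x by (intro mult_left_mono) auto
    finally show "p (s c (f x)) \<le> cmod c * C1" .
  qed
qed

lemma tensor_fun_apply: "tensor_fun tp f g (t, s) = tp (f t) (g s)"
  by (simp add: tensor_fun_def)

context
  fixes I :: "'i topology" and J :: "'j topology"
    and sX :: "complex \<Rightarrow> 'x::ab_group_add \<Rightarrow> 'x" and AX :: "('x \<Rightarrow> real) set"
    and sY :: "complex \<Rightarrow> 'y::ab_group_add \<Rightarrow> 'y" and AY :: "('y \<Rightarrow> real) set"
    and sZ :: "complex \<Rightarrow> 'z::ab_group_add \<Rightarrow> 'z" and AZ :: "('z \<Rightarrow> real) set"
    and tp :: "'x \<Rightarrow> 'y \<Rightarrow> 'z"
  assumes X: "hlcs sX AX" and Y: "hlcs sY AY" and Z: "hlcs sZ AZ"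
    and tensor: "alg_tensor sX sY sZ tp"
    and cont: "continuous_map (prod_topology (semtop AX) (semtop AY)) (semtop AZ) (\<lambda>(x, y). tp x y)"
begin

lemma Cb_tensor:
  assumes f: "f \<in> Cbfun I AX" and g: "g \<in> Cbfun J AY"
  shows "tensor_fun tp f g \<in> Cbfun (prod_topology I J) AZ"
  unfolding Cbfun_iff
proof (intro conjI ballI)
  show "tensor_fun tp f g \<in> Cfun (prod_topology I J) AZ"
    using Cfun_tensor[OF tensor cont] f g unfolding Cbfun_iff by blast
  fix p assume p: "p \<in> AZ"
  obtain P1 P2 d where P: "finite P1" "P1 \<subseteq> AX" "finite P2" "P2 \<subseteq> AY" "d > 0"
    "\<forall>x y a b. a > 0 \<longrightarrow> b > 0 \<longrightarrow> (\<Sum>q\<in>P1. q x) < a * d \<longrightarrow> (\<Sum>q\<in>P2. q y) < b * d \<longrightarrow> p (tp x y) < a * b"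
    using bil[OF X Y Z tensor cont p] by (elim exE conjE)
  have "\<forall>q\<in>P1. \<exists>M. \<forall>t\<in>topspace I. q (f t) \<le> M" using f P(2) unfolding Cbfun_iff by blast
  from sum_bound[OF P(1) this] obtain MA where MA: "\<forall>t\<in>topspace I. (\<Sum>q\<in>P1. q (f t)) \<le> MA" by (elim exE)
  have "\<forall>q\<in>P2. \<exists>M. \<forall>t\<in>topspace J. q (g t) \<le> M" using g P(4) unfolding Cbfun_iff by blast
  from sum_bound[OF P(3) this] obtain MB where MB: "\<forall>t\<in>topspace J. (\<Sum>q\<in>P2. q (g t)) \<le> MB" by (elim exE)
  define a where "a = (\<bar>MA\<bar> + 1) / d"
  define b where "b = (\<bar>MB\<bar> + 1) / d"
  have a: "a > 0" and b: "b > 0" using P(5) by (simp_all add: a_def b_def)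
  have ad: "a * d = \<bar>MA\<bar> + 1" and bd: "b * d = \<bar>MB\<bar> + 1" using P(5) by (simp_all add: a_def b_def)
  show "\<exists>C. \<forall>x\<in>topspace (prod_topology I J). p (tensor_fun tp f g x) \<le> C"
  proof (intro exI[of _ "a * b"] ballI)
    fix u assume u: "u \<in> topspace (prod_topology I J)"
    obtain t s where ts: "u = (t, s)" by (cases u)
    have t: "t \<in> topspace I" and s: "s \<in> topspace J" using u ts by auto
    have "(\<Sum>q\<in>P1. q (f t)) < a * d" using MA t ad by fastforce
    moreover have "(\<Sum>q\<in>P2. q (g s)) < b * d" using MB s bd by fastforce
    ultimately have "p (tp (f t) (g s)) < a * b" using P(6) a b by blast
    then show "p (tensor_fun tp f g u) \<le> a * b" unfolding ts tensor_fun_apply by simp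
  qed
qed

lemma ts_Cb:
  "tensor_span sZ tp (Cbfun I AX) (Cbfun J AY) \<subseteq> Cbfun (prod_topology I J) AZ"
proof (rule ts_subset)
  show "(\<lambda>u. 0) \<in> Cbfun (prod_topology I J) AZ" by (rule Cb_zero[OF Z])
  show "\<And>a b. a \<in> Cbfun (prod_topology I J) AZ \<Longrightarrow> b \<in> Cbfun (prod_topology I J) AZ \<Longrightarrow>
    (\<lambda>u. a u + b u) \<in> Cbfun (prod_topology I J) AZ" using Cb_add[OF Z] by blast
  show "\<And>c a. a \<in> Cbfun (prod_topology I J) AZ \<Longrightarrow> (\<lambda>u. sZ c (a u)) \<in> Cbfun (prod_topology I J) AZ"
    using Cb_scale[OF Z] by blast
  show "\<And>f g. f \<in> Cbfun I AX \<Longrightarrow> g \<in> Cbfun J AY \<Longrightarrow> tensor_fun tp f g \<in> Cbfun (prod_topology I J) AZ"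
    using Cb_tensor by blast
qed

lemma C0_tensor:
  assumes HI: "Hausdorff_space I" and HJ: "Hausdorff_space J"
    and f: "f \<in> C0fun I AX" and g: "g \<in> C0fun J AY"
  shows "tensor_fun tp f g \<in> C0fun (prod_topology I J) AZ"
proof -
  have HP: "Hausdorff_space (prod_topology I J)" using HI HJ by (simp add: Hausdorff_space_prod_topology)
  have fC: "f \<in> Cfun I AX" and fv: "van I AX f" using f C0fun_iff[OF HI] by auto
  have gC: "g \<in> Cfun J AY" and gv: "van J AY g" using g C0fun_iff[OF HJ] by auto
  have "van (prod_topology I J) AZ (tensor_fun tp f g)"
    unfolding van_def
  proof (intro ballI allI impI)
    fix p e assume p: "p \<in> AZ" and e: "(e::real) > 0"
    obtain P1 P2 d where P: "finite P1" "P1 \<subseteq> AX" "finite P2" "P2 \<subseteq> AY" "d > 0"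
      "\<forall>x y a b. a > 0 \<longrightarrow> b > 0 \<longrightarrow> (\<Sum>q\<in>P1. q x) < a * d \<longrightarrow> (\<Sum>q\<in>P2. q y) < b * d \<longrightarrow> p (tp x y) < a * b"
      using bil[OF X Y Z tensor cont p] by (elim exE conjE)
    have "\<forall>q\<in>P1. \<exists>M. \<forall>t\<in>topspace I. q (f t) \<le> M"
      using C0_bounded[OF X fC fv] P(2) by blast
    from sum_bound[OF P(1) this] obtain MA where MA: "\<forall>t\<in>topspace I. (\<Sum>q\<in>P1. q (f t)) \<le> MA" by (elim exE)
    have "\<forall>q\<in>P2. \<exists>M. \<forall>t\<in>topspace J. q (g t) \<le> M"
      using C0_bounded[OF Y gC gv] P(4) by blast
    from sum_bound[OF P(3) this] obtain MB where MB: "\<forall>t\<in>topspace J. (\<Sum>q\<in>P2. q (g t)) \<le> MB" by (elim exE)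
    define a where "a = (\<bar>MA\<bar> + 1) / d"
    define b where "b = (\<bar>MB\<bar> + 1) / d"
    have a: "a > 0" and b: "b > 0" using P(5) by (simp_all add: a_def b_def)
    have ad: "a * d = \<bar>MA\<bar> + 1" and bd: "b * d = \<bar>MB\<bar> + 1" using P(5) by (simp_all add: a_def b_def)
    have e1: "(e / b) * d > 0" using e b P(5) by simp
    have e2: "(e / a) * d > 0" using e a P(5) by simp
    have "\<exists>C. compactin I C \<and> (\<forall>x\<in>topspace I. x \<notin> C \<longrightarrow> (\<Sum>q\<in>P1. q (f x)) < (e / b) * d)"
      by (rule sum_van[OF P(1) P(2) fv e1])
    then obtain C1 where C1: "compactin I C1" "\<forall>x\<in>topspace I. x \<notin> C1 \<longrightarrow> (\<Sum>q\<in>P1. q (f x)) < (e / b) * d"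
      by (elim exE conjE)
    have "\<exists>C. compactin J C \<and> (\<forall>x\<in>topspace J. x \<notin> C \<longrightarrow> (\<Sum>q\<in>P2. q (g x)) < (e / a) * d)"
      by (rule sum_van[OF P(3) P(4) gv e2])
    then obtain C2 where C2: "compactin J C2" "\<forall>x\<in>topspace J. x \<notin> C2 \<longrightarrow> (\<Sum>q\<in>P2. q (g x)) < (e / a) * d"
      by (elim exE conjE)
    show "\<exists>C. compactin (prod_topology I J) C \<and> (\<forall>x\<in>topspace (prod_topology I J) - C. p (tensor_fun tp f g x) < e)"
    proof (intro exI[of _ "C1 \<times> C2"] conjI ballI)
      show "compactin (prod_topology I J) (C1 \<times> C2)" using C1(1) C2(1) by (simp add: compactin_Times)
      fix u assume u: "u \<in> topspace (prod_topology I J) - C1 \<times> C2"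
      obtain t s where ts: "u = (t, s)" by (cases u)
      have t: "t \<in> topspace I" and s: "s \<in> topspace J" using u ts by auto
      have A1: "(\<Sum>q\<in>P1. q (f t)) < a * d" using MA t ad by fastforce
      have B1: "(\<Sum>q\<in>P2. q (g s)) < b * d" using MB s bd by fastforce
      have "t \<notin> C1 \<or> s \<notin> C2" using u ts by auto
      then have "p (tp (f t) (g s)) < e"
      proof
        assume "t \<notin> C1"
        then have "(\<Sum>q\<in>P1. q (f t)) < (e / b) * d" using C1(2) t by blast
        moreover have "e / b > 0" using e b by simp
        ultimately have "p (tp (f t) (g s)) < (e / b) * b" using P(6) b B1 by blast
        then show ?thesis using b by simp
      next
        assume "s \<notin> C2"
        then have "(\<Sum>q\<in>P2. q (g s)) < (e / a) * d" using C2(2) s by blast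
        moreover have "e / a > 0" using e a by simp
        ultimately have "p (tp (f t) (g s)) < a * (e / a)" using P(6) a A1 by blast
        then show ?thesis using a by simp
      qed
      then show "p (tensor_fun tp f g u) < e" unfolding ts tensor_fun_apply .
    qed
  qed
  moreover have "tensor_fun tp f g \<in> Cfun (prod_topology I J) AZ"
    using Cfun_tensor[OF tensor cont fC gC] .
  ultimately show ?thesis using C0fun_iff[OF HP] by blast
qed

lemma ts_C0:
  assumes HI: "Hausdorff_space I" and HJ: "Hausdorff_space J"
  shows "tensor_span sZ tp (C0fun I AX) (C0fun J AY) \<subseteq> C0fun (prod_topology I J) AZ"
proof (rule ts_subset)
  have HP: "Hausdorff_space (prod_topology I J)" using HI HJ by (simp add: Hausdorff_space_prod_topology)
  show "(\<lambda>u. 0) \<in> C0fun (prod_topology I J) AZ"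
    using C0fun_iff[OF HP] Cfun_zero van_zero[OF Z] by blast
  show "\<And>a b. a \<in> C0fun (prod_topology I J) AZ \<Longrightarrow> b \<in> C0fun (prod_topology I J) AZ \<Longrightarrow>
    (\<lambda>u. a u + b u) \<in> C0fun (prod_topology I J) AZ"
    using C0fun_iff[OF HP] Cfun_add[OF Z] van_add[OF Z] by blast
  show "\<And>c a. a \<in> C0fun (prod_topology I J) AZ \<Longrightarrow> (\<lambda>u. sZ c (a u)) \<in> C0fun (prod_topology I J) AZ"
    using C0fun_iff[OF HP] Cfun_scale[OF Z] van_scale[OF Z] by blast
  show "\<And>f g. f \<in> C0fun I AX \<Longrightarrow> g \<in> C0fun J AY \<Longrightarrow> tensor_fun tp f g \<in> C0fun (prod_topology I J) AZ"
    using C0_tensor[OF HI HJ] by blast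
qed

end



section \<open>Partitions of unity on compact sets\<close>

lemma bump:
  assumes CR: "completely_regular_space X" and A: "openin X A" and t: "t \<in> A"
  shows "\<exists>h N. continuous_map X euclideanreal h \<and> (\<forall>x\<in>topspace X. 0 \<le> h x \<and> h x \<le> 1) \<and>
     (\<forall>x\<in>topspace X. x \<notin> A \<longrightarrow> h x = 0) \<and> openin X N \<and> t \<in> N \<and> (\<forall>x\<in>N. h x = 1)"
proof -
  have At: "A \<subseteq> topspace X" using openin_subset[OF A] .
  have cS: "closedin X (topspace X - A)" using A by (intro closedin_diff) auto
  have tS: "t \<in> topspace X - (topspace X - A)" using t At by blast
  have "\<exists>f::'a\<Rightarrow>real. continuous_map X (top_of_set {0..1}) f \<and> f t = 0 \<and> f ` (topspace X - A) \<subseteq> {1}"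
    using CR cS tS unfolding completely_regular_space_def by blast
  then obtain f :: "'a \<Rightarrow> real" where f: "continuous_map X (top_of_set {0..1}) f" "f t = 0" "f ` (topspace X - A) \<subseteq> {1}"
    by (elim exE conjE)
  have fc: "continuous_map X euclideanreal f" and fr: "\<And>x. x \<in> topspace X \<Longrightarrow> f x \<in> {0..1}"
    using f(1) unfolding continuous_map_in_subtopology by auto
  define h where "h x = min 1 (2 - 2 * f x)" for x
  define N where "N = {x \<in> topspace X. f x \<in> {..<1/2}}"
  show ?thesis
  proof (intro exI[of _ h] exI[of _ N] conjI ballI impI)
    show "continuous_map X euclideanreal h" unfolding h_def using fc by (intro continuous_intros) auto
    fix x assume x: "x \<in> topspace X"
    show "0 \<le> h x" "h x \<le> 1" using fr[OF x] by (auto simp: h_def)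
  next
    fix x assume x: "x \<in> topspace X" and xA: "x \<notin> A"
    then have "f x = 1" using f(3) by blast
    then show "h x = 0" by (simp add: h_def)
  next
    show "openin X N" unfolding N_def by (rule openin_continuous_map_preimage[OF fc]) simp
    show "t \<in> N" unfolding N_def using f(2) tS by simp
  next
    fix x assume "x \<in> N"
    then have "f x < 1/2" unfolding N_def by simp
    then show "h x = 1" by (simp add: h_def)
  qed
qed

lemma partition:
  assumes CR: "completely_regular_space X" and K: "compactin X K"
    and A: "\<forall>t\<in>K. openin X (A t) \<and> t \<in> A t"
  shows "\<exists>T \<alpha>. finite T \<and> T \<subseteq> K \<and> (\<forall>i\<in>T. continuous_map X euclideanreal (\<alpha> i)) \<and>
    (\<forall>i\<in>T. \<forall>x\<in>topspace X. 0 \<le> \<alpha> i x) \<and> (\<forall>i\<in>T. \<forall>x\<in>topspace X. x \<notin> A i \<longrightarrow> \<alpha> i x = 0) \<and>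
    (\<forall>x\<in>topspace X. (\<Sum>i\<in>T. \<alpha> i x) \<le> 1) \<and> (\<forall>x\<in>K. (\<Sum>i\<in>T. \<alpha> i x) = 1)"
proof -
  have "\<forall>t\<in>K. \<exists>h N. continuous_map X euclideanreal h \<and> (\<forall>x\<in>topspace X. 0 \<le> h x \<and> h x \<le> 1) \<and>
     (\<forall>x\<in>topspace X. x \<notin> A t \<longrightarrow> h x = 0) \<and> openin X N \<and> t \<in> N \<and> (\<forall>x\<in>N. h x = 1)"
  proof
    fix t assume "t \<in> K"
    then have "openin X (A t)" "t \<in> A t" using A by auto
    then show "\<exists>h N. continuous_map X euclideanreal h \<and> (\<forall>x\<in>topspace X. 0 \<le> h x \<and> h x \<le> 1) \<and>
     (\<forall>x\<in>topspace X. x \<notin> A t \<longrightarrow> h x = 0) \<and> openin X N \<and> t \<in> N \<and> (\<forall>x\<in>N. h x = 1)"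
      by (rule bump[OF CR])
  qed
  from bchoice[OF this] obtain h where "\<forall>t\<in>K. \<exists>N. continuous_map X euclideanreal (h t) \<and> (\<forall>x\<in>topspace X. 0 \<le> h t x \<and> h t x \<le> 1) \<and>
     (\<forall>x\<in>topspace X. x \<notin> A t \<longrightarrow> h t x = 0) \<and> openin X N \<and> t \<in> N \<and> (\<forall>x\<in>N. h t x = 1)"
    by (elim exE)
  from bchoice[OF this] obtain N where hN: "\<forall>t\<in>K. continuous_map X euclideanreal (h t) \<and> (\<forall>x\<in>topspace X. 0 \<le> h t x \<and> h t x \<le> 1) \<and>
     (\<forall>x\<in>topspace X. x \<notin> A t \<longrightarrow> h t x = 0) \<and> openin X (N t) \<and> t \<in> N t \<and> (\<forall>x\<in>N t. h t x = 1)"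
    by (elim exE)
  have o1: "\<forall>B\<in>N ` K. openin X B" using hN by blast
  have o2: "K \<subseteq> \<Union>(N ` K)" using hN by blast
  have cd: "\<forall>U. (\<forall>B\<in>U. openin X B) \<and> K \<subseteq> \<Union>U \<longrightarrow> (\<exists>F. finite F \<and> F \<subseteq> U \<and> K \<subseteq> \<Union>F)"
    using K unfolding compactin_def by (rule conjunct2)
  have "\<exists>F. finite F \<and> F \<subseteq> N ` K \<and> K \<subseteq> \<Union>F" using cd[rule_format, OF conjI[OF o1 o2]] .
  then obtain F where F: "finite F" "F \<subseteq> N ` K" "K \<subseteq> \<Union>F" by (elim exE conjE)
  have "\<exists>T\<subseteq>K. finite T \<and> F = N ` T" using finite_subset_image[OF F(1) F(2)] .
  then obtain T where T: "T \<subseteq> K" "finite T" "F = N ` T" by (elim exE conjE)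
  have hc: "\<And>i. i \<in> T \<Longrightarrow> continuous_map X euclideanreal (h i)" using hN T(1) by blast
  have h01: "\<And>i x. i \<in> T \<Longrightarrow> x \<in> topspace X \<Longrightarrow> 0 \<le> h i x \<and> h i x \<le> 1" using hN T(1) by blast
  have h0: "\<And>i x. i \<in> T \<Longrightarrow> x \<in> topspace X \<Longrightarrow> x \<notin> A i \<Longrightarrow> h i x = 0" using hN T(1) by blast
  have h1: "\<And>i x. i \<in> T \<Longrightarrow> x \<in> N i \<Longrightarrow> h i x = 1" using hN T(1) by blast
  define S where "S x = (\<Sum>i\<in>T. h i x)" for x
  define \<alpha> where "\<alpha> i x = h i x / max 1 (S x)" for i x
  have Sc: "continuous_map X euclideanreal S" unfolding S_def using hc T(2) by (intro continuous_map_sum) auto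
  have mpos: "\<And>x. max 1 (S x) > 0" by simp
  show ?thesis
  proof (intro exI[of _ T] exI[of _ \<alpha>] conjI ballI impI)
    show "finite T" "T \<subseteq> K" using T by auto
  next
    fix i assume i: "i \<in> T"
    show "continuous_map X euclideanreal (\<alpha> i)"
      unfolding \<alpha>_def using hc[OF i] Sc by (intro continuous_map_real_divide continuous_intros) auto
  next
    fix i x assume i: "i \<in> T" and x: "x \<in> topspace X"
    show "0 \<le> \<alpha> i x" unfolding \<alpha>_def using h01[OF i x] mpos[of x] by simp
  next
    fix i x assume i: "i \<in> T" and x: "x \<in> topspace X" and xA: "x \<notin> A i"
    show "\<alpha> i x = 0" unfolding \<alpha>_def using h0[OF i x xA] by simp
  next
    fix x assume x: "x \<in> topspace X"
    have "(\<Sum>i\<in>T. \<alpha> i x) = S x / max 1 (S x)" unfolding \<alpha>_def S_def by (simp add: sum_divide_distrib)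
    also have "\<dots> \<le> 1" using mpos[of x] by (simp add: divide_le_eq_1)
    finally show "(\<Sum>i\<in>T. \<alpha> i x) \<le> 1" .
  next
    fix x assume xK: "x \<in> K"
    have x: "x \<in> topspace X" using xK compactin_subset_topspace[OF K] by blast
    obtain i where i: "i \<in> T" "x \<in> N i" using F(3) T(3) xK by blast
    have "h i x \<le> S x" unfolding S_def using i(1) T(2) h01 x by (intro member_le_sum) auto
    then have S1: "S x \<ge> 1" using h1[OF i] by simp
    have "(\<Sum>i\<in>T. \<alpha> i x) = S x / max 1 (S x)" unfolding \<alpha>_def S_def by (simp add: sum_divide_distrib)
    also have "\<dots> = 1" using S1 by simp
    finally show "(\<Sum>i\<in>T. \<alpha> i x) = 1" .
  qed
qed



definition atoms :: "'a topology \<Rightarrow> 'a set \<Rightarrow> (complex \<Rightarrow> 'x::ab_group_add \<Rightarrow> 'x) \<Rightarrow> ('a \<Rightarrow> 'x) set" where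
  "atoms X Ob s = {(\<lambda>t. if t \<in> topspace X then s (complex_of_real (\<alpha> t)) x else 0) | \<alpha> x.
      continuous_map X euclideanreal \<alpha> \<and> (\<forall>t\<in>topspace X. 0 \<le> \<alpha> t \<and> \<alpha> t \<le> 1 \<and> (t \<notin> Ob \<longrightarrow> \<alpha> t = 0))}"

lemma atoms_intro:
  assumes "continuous_map X euclideanreal \<alpha>" "\<forall>t\<in>topspace X. 0 \<le> \<alpha> t \<and> \<alpha> t \<le> 1 \<and> (t \<notin> Ob \<longrightarrow> \<alpha> t = 0)"
  shows "(\<lambda>t. if t \<in> topspace X then s (complex_of_real (\<alpha> t)) x else 0) \<in> atoms X Ob s"
  unfolding atoms_def
  apply (rule CollectI)
  apply (rule exI[of _ \<alpha>])
  apply (rule exI[of _ x])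
  using assms by simp

lemma atoms_elim:
  assumes "h \<in> atoms X Ob s"
  obtains \<alpha> x where "h = (\<lambda>t. if t \<in> topspace X then s (complex_of_real (\<alpha> t)) x else 0)"
    "continuous_map X euclideanreal \<alpha>" "\<forall>t\<in>topspace X. 0 \<le> \<alpha> t \<and> \<alpha> t \<le> 1 \<and> (t \<notin> Ob \<longrightarrow> \<alpha> t = 0)"
  using assms unfolding atoms_def by blast

lemma atoms_Cfun:
  assumes A: "hlcs s A"
  shows "atoms X Ob s \<subseteq> Cfun X A"
proof
  interpret M: module s using hlcs_vs[OF A] by (rule vs_module)
  fix h assume "h \<in> atoms X Ob s"
  then obtain \<alpha> x where h: "h = (\<lambda>t. if t \<in> topspace X then s (complex_of_real (\<alpha> t)) x else 0)"
    and ac: "continuous_map X euclideanreal \<alpha>" by (rule atoms_elim)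
  show "h \<in> Cfun X A"
  proof (rule CfunI)
    show "continuous_map X (semtop A) h"
    proof (rule cont_semtopI)
      fix t p e assume t: "t \<in> topspace X" and p: "p \<in> A" and e: "(e::real) > 0"
      have snp: "seminorm s p" using hlcs_sn[OF A p] .
      have px: "p x \<ge> 0" by (rule sn_nonneg[OF hlcs_vs[OF A] snp])
      define d where "d = e / (p x + 1)"
      have d: "d > 0" using e px by (simp add: d_def)
      define N where "N = {y \<in> topspace X. \<alpha> y \<in> ball (\<alpha> t) d}"
      show "\<exists>N. openin X N \<and> t \<in> N \<and> (\<forall>y\<in>N. p (h y - h t) < e)"
      proof (intro exI[of _ N] conjI ballI)
        show "openin X N" unfolding N_def by (rule openin_continuous_map_preimage[OF ac]) simp
        show "t \<in> N" unfolding N_def using t d by simp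
        fix y assume y: "y \<in> N"
        then have yt: "y \<in> topspace X" and dy: "\<bar>\<alpha> y - \<alpha> t\<bar> < d"
          unfolding N_def by (auto simp: dist_real_def abs_minus_commute)
        have eqn: "h y - h t = s (complex_of_real (\<alpha> y - \<alpha> t)) x"
          using yt t unfolding h by (simp add: M.scale_left_diff_distrib)
        have "p (h y - h t) = \<bar>\<alpha> y - \<alpha> t\<bar> * p x"
          unfolding eqn by (rule sn_scale_real[OF hlcs_vs[OF A] snp])
        also have "\<dots> \<le> d * p x" using dy px by (intro mult_right_mono) auto
        also have "\<dots> < e"
        proof -
          have "e * p x < e * (p x + 1)" using e by simp
          then show ?thesis unfolding d_def using px by (simp add: field_simps)
        qed
        finally show "p (h y - h t) < e" .
      qed
    qed
  next
    fix t assume "t \<notin> topspace X"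
    then show "h t = 0" unfolding h by simp
  qed
qed

lemma atoms_Cb:
  assumes A: "hlcs s A"
  shows "atoms X Ob s \<subseteq> Cbfun X A"
proof
  interpret M: module s using hlcs_vs[OF A] by (rule vs_module)
  fix h assume hA: "h \<in> atoms X Ob s"
  then obtain \<alpha> x where h: "h = (\<lambda>t. if t \<in> topspace X then s (complex_of_real (\<alpha> t)) x else 0)"
    and ar: "\<forall>t\<in>topspace X. 0 \<le> \<alpha> t \<and> \<alpha> t \<le> 1 \<and> (t \<notin> Ob \<longrightarrow> \<alpha> t = 0)" by (rule atoms_elim)
  show "h \<in> Cbfun X A"
    unfolding Cbfun_iff
  proof (intro conjI ballI)
    show "h \<in> Cfun X A" using atoms_Cfun[OF A] hA by blast
    fix p assume p: "p \<in> A"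
    have snp: "seminorm s p" using hlcs_sn[OF A p] .
    have px: "p x \<ge> 0" by (rule sn_nonneg[OF hlcs_vs[OF A] snp])
    show "\<exists>C. \<forall>t\<in>topspace X. p (h t) \<le> C"
    proof (intro exI[of _ "p x"] ballI)
      fix t assume t: "t \<in> topspace X"
      have "p (h t) = \<bar>\<alpha> t\<bar> * p x" unfolding h using t sn_scale_real[OF hlcs_vs[OF A] snp] by simp
      also have "\<dots> \<le> 1 * p x" using ar t px by (intro mult_right_mono) auto
      finally show "p (h t) \<le> p x" by simp
    qed
  qed
qed

lemma atoms_C0:
  assumes A: "hlcs s A" and H: "Hausdorff_space X" and C: "compactin X C" and OC: "Ob \<subseteq> C"
  shows "atoms X Ob s \<subseteq> C0fun X A"
proof
  interpret M: module s using hlcs_vs[OF A] by (rule vs_module)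
  fix h assume hA: "h \<in> atoms X Ob s"
  then obtain \<alpha> x where h: "h = (\<lambda>t. if t \<in> topspace X then s (complex_of_real (\<alpha> t)) x else 0)"
    and ar: "\<forall>t\<in>topspace X. 0 \<le> \<alpha> t \<and> \<alpha> t \<le> 1 \<and> (t \<notin> Ob \<longrightarrow> \<alpha> t = 0)" by (rule atoms_elim)
  have "van X A h"
    unfolding van_def
  proof (intro ballI allI impI)
    fix p e assume p: "p \<in> A" and e: "(e::real) > 0"
    show "\<exists>C. compactin X C \<and> (\<forall>x\<in>topspace X - C. p (h x) < e)"
    proof (intro exI[of _ C] conjI ballI)
      show "compactin X C" by fact
      fix t assume t: "t \<in> topspace X - C"
      then have "\<alpha> t = 0" using ar OC by blast
      then have "h t = 0" using t unfolding h by simp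
      then show "p (h t) < e" using e sn_zero[OF hlcs_vs[OF A] hlcs_sn[OF A p]] by simp
    qed
  qed
  then show "h \<in> C0fun X A" using C0fun_iff[OF H] atoms_Cfun[OF A] hA by blast
qed

lemma double_sum_est:
  assumes vs: "vector_space s" and sn: "seminorm s r" and T1: "finite T1" and T2: "finite T2"
    and a: "\<And>i. i \<in> T1 \<Longrightarrow> a i \<ge> 0" and b: "\<And>j. j \<in> T2 \<Longrightarrow> b j \<ge> 0"
    and est: "\<And>i j. i \<in> T1 \<Longrightarrow> j \<in> T2 \<Longrightarrow> a i > 0 \<Longrightarrow> b j > 0 \<Longrightarrow> r (z i j - z0) \<le> \<eta>"
    and eta: "\<eta> \<ge> 0"
  shows "r ((\<Sum>i\<in>T1. \<Sum>j\<in>T2. s (complex_of_real (a i * b j)) (z i j))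
           - s (complex_of_real ((\<Sum>i\<in>T1. a i) * (\<Sum>j\<in>T2. b j))) z0)
         \<le> (\<Sum>i\<in>T1. a i) * (\<Sum>j\<in>T2. b j) * \<eta>"
proof -
  interpret M: module s using vs by (rule vs_module)
  have prod: "(\<Sum>i\<in>T1. a i) * (\<Sum>j\<in>T2. b j) = (\<Sum>i\<in>T1. \<Sum>j\<in>T2. a i * b j)"
    by (simp add: sum_product)
  have "s (complex_of_real ((\<Sum>i\<in>T1. a i) * (\<Sum>j\<in>T2. b j))) z0
        = (\<Sum>i\<in>T1. \<Sum>j\<in>T2. s (complex_of_real (a i * b j)) z0)"
    unfolding prod by (simp add: M.scale_sum_left)
  then have eq: "(\<Sum>i\<in>T1. \<Sum>j\<in>T2. s (complex_of_real (a i * b j)) (z i j))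
           - s (complex_of_real ((\<Sum>i\<in>T1. a i) * (\<Sum>j\<in>T2. b j))) z0
        = (\<Sum>i\<in>T1. \<Sum>j\<in>T2. s (complex_of_real (a i * b j)) (z i j - z0))"
    by (simp add: sum_subtractf[symmetric] M.scale_right_diff_distrib)
  have "r (\<Sum>i\<in>T1. \<Sum>j\<in>T2. s (complex_of_real (a i * b j)) (z i j - z0))
        \<le> (\<Sum>i\<in>T1. r (\<Sum>j\<in>T2. s (complex_of_real (a i * b j)) (z i j - z0)))"
    by (rule sn_sum[OF vs sn])
  also have "\<dots> \<le> (\<Sum>i\<in>T1. \<Sum>j\<in>T2. r (s (complex_of_real (a i * b j)) (z i j - z0)))"
    by (intro sum_mono sn_sum[OF vs sn])
  also have "\<dots> \<le> (\<Sum>i\<in>T1. \<Sum>j\<in>T2. a i * b j * \<eta>)"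
  proof (intro sum_mono)
    fix i j assume i: "i \<in> T1" and j: "j \<in> T2"
    have ab: "a i * b j \<ge> 0" using a[OF i] b[OF j] by simp
    have "r (s (complex_of_real (a i * b j)) (z i j - z0)) = \<bar>a i * b j\<bar> * r (z i j - z0)"
      by (rule sn_scale_real[OF vs sn])
    also have "\<dots> = (a i * b j) * r (z i j - z0)" using ab by simp
    also have "\<dots> \<le> a i * b j * \<eta>"
    proof (cases "a i > 0 \<and> b j > 0")
      case True
      then show ?thesis using est[OF i j] ab by (intro mult_left_mono) auto
    next
      case False
      then have "a i * b j = 0" using a[OF i] b[OF j] by auto
      then show ?thesis by (simp only: mult_zero_left order_refl)
    qed
    finally show "r (s (complex_of_real (a i * b j)) (z i j - z0)) \<le> a i * b j * \<eta>" .
  qed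
  also have "\<dots> = (\<Sum>i\<in>T1. a i) * (\<Sum>j\<in>T2. b j) * \<eta>"
    unfolding prod by (simp add: sum_distrib_right)
  finally show ?thesis unfolding eq .
qed



lemma tp_rep_fun:
  assumes tensor: "alg_tensor sX sY sZ tp"
  obtains nn cc xx yy where "\<forall>z. z = (\<Sum>k<(nn z::nat). sZ (cc z k) (tp (xx z k) (yy z k)))"
proof -
  have "\<forall>z. \<exists>n c xs ys. z = (\<Sum>k<(n::nat). sZ (c k) (tp (xs k) (ys k)))"
    by (intro allI) (rule tp_rep[OF tensor])
  from choice[OF this] obtain nn where "\<forall>z. \<exists>c xs ys. z = (\<Sum>k<(nn z::nat). sZ (c k) (tp (xs k) (ys k)))"
    by (elim exE)
  from choice[OF this] obtain cc where "\<forall>z. \<exists>xs ys. z = (\<Sum>k<(nn z::nat). sZ (cc z k) (tp (xs k) (ys k)))"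
    by (elim exE)
  from choice[OF this] obtain xx where "\<forall>z. \<exists>ys. z = (\<Sum>k<(nn z::nat). sZ (cc z k) (tp (xx z k) (ys k)))"
    by (elim exE)
  from choice[OF this] obtain yy where "\<forall>z. z = (\<Sum>k<(nn z::nat). sZ (cc z k) (tp (xx z k) (yy z k)))"
    by (elim exE)
  then show ?thesis using that by blast
qed

lemma compact_cover_finite:
  assumes K: "compactin X K" and o: "\<forall>x\<in>K. openin X (V x) \<and> x \<in> V x"
  obtains S0 where "S0 \<subseteq> K" "finite S0" "K \<subseteq> \<Union>(V ` S0)"
proof -
  have o1: "\<forall>B\<in>V ` K. openin X B" using o by blast
  have o2: "K \<subseteq> \<Union>(V ` K)" using o by blast
  have cd: "\<forall>U. (\<forall>B\<in>U. openin X B) \<and> K \<subseteq> \<Union>U \<longrightarrow> (\<exists>F. finite F \<and> F \<subseteq> U \<and> K \<subseteq> \<Union>F)"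
    using K unfolding compactin_def by (rule conjunct2)
  have "\<exists>F. finite F \<and> F \<subseteq> V ` K \<and> K \<subseteq> \<Union>F" using cd[rule_format, OF conjI[OF o1 o2]] .
  then obtain F where F: "finite F" "F \<subseteq> V ` K" "K \<subseteq> \<Union>F" by (elim exE conjE)
  have "\<exists>C0\<subseteq>K. finite C0 \<and> F = V ` C0" using finite_subset_image[OF F(1) F(2)] .
  then obtain C0 where C0: "C0 \<subseteq> K" "finite C0" "F = V ` C0" by (elim exE conjE)
  show ?thesis using that[OF C0(1) C0(2)] F(3) C0(3) by blast
qed

context
  fixes I :: "'i topology" and J :: "'j topology"
    and sX :: "complex \<Rightarrow> 'x::ab_group_add \<Rightarrow> 'x" and AX :: "('x \<Rightarrow> real) set"
    and sY :: "complex \<Rightarrow> 'y::ab_group_add \<Rightarrow> 'y" and AY :: "('y \<Rightarrow> real) set"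
    and sZ :: "complex \<Rightarrow> 'z::ab_group_add \<Rightarrow> 'z" and AZ :: "('z \<Rightarrow> real) set"
    and tp :: "'x \<Rightarrow> 'y \<Rightarrow> 'z"
  assumes X: "hlcs sX AX" and Y: "hlcs sY AY" and Z: "hlcs sZ AZ"
    and tensor: "alg_tensor sX sY sZ tp"
    and CRI: "completely_regular_space I" and CRJ: "completely_regular_space J"
begin

lemma core:
  assumes F: "F \<in> Cfun (prod_topology I J) AZ"
    and P: "finite P" "P \<subseteq> AZ"
    and K1: "compactin I K1" and K2: "compactin J K2"
    and O1: "openin I O1" "K1 \<subseteq> O1" and O2: "openin J O2" "K2 \<subseteq> O2"
    and eta: "\<eta> > 0"
  shows "\<exists>w \<in> tensor_span sZ tp (atoms I O1 sX) (atoms J O2 sY).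
     (\<forall>t\<in>K1. \<forall>s\<in>K2. (\<Sum>p\<in>P. p (F (t, s) - w (t, s))) \<le> \<eta>) \<and>
     (\<forall>t\<in>topspace I. \<forall>s\<in>topspace J. \<forall>p\<in>P. p (w (t, s)) \<le> p (F (t, s)) + \<eta>)"
proof -
  interpret MX: module sX using hlcs_vs[OF X] by (rule vs_module)
  interpret MY: module sY using hlcs_vs[OF Y] by (rule vs_module)
  interpret MZ: module sZ using hlcs_vs[OF Z] by (rule vs_module)
  have vsZ: "vector_space sZ" using hlcs_vs[OF Z] .
  define r where "r z = (\<Sum>p\<in>P. p z)" for z
  have snP: "\<And>p. p \<in> P \<Longrightarrow> seminorm sZ p" using P(2) hlcs_sn[OF Z] by blast
  have snr: "seminorm sZ r" unfolding r_def by (rule seminorm_sum[OF vsZ snP])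
  have Fc: "continuous_map (prod_topology I J) (semtop AZ) F" using CfunD(1)[OF F] .
  have K1I: "K1 \<subseteq> topspace I" using compactin_subset_topspace[OF K1] .
  have K2J: "K2 \<subseteq> topspace J" using compactin_subset_topspace[OF K2] .
  have rtri: "\<And>a b c. r (a - c) \<le> r (a - b) + r (b - c)" by (rule sn_diff_tri[OF vsZ snr])
  have rcomm: "\<And>a b. r (a - b) = r (b - a)" by (rule sn_diff_commute[OF vsZ snr])

  have nb: "\<exists>U V. openin I U \<and> openin J V \<and> t \<in> U \<and> s \<in> V \<and>
              (\<forall>t'\<in>U. \<forall>s'\<in>V. r (F (t', s') - F (t, s)) < \<epsilon>)"
    if t: "t \<in> topspace I" and s: "s \<in> topspace J" and ep: "\<epsilon> > 0" for t s \<epsilon>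
  proof -
    have ts: "(t, s) \<in> topspace (prod_topology I J)" using t s by simp
    from cont_semtop_sumD[OF Z Fc ts P(1) P(2) ep] obtain N where
      N: "openin (prod_topology I J) N" "(t, s) \<in> N" "\<forall>y\<in>N. (\<Sum>p\<in>P. p (F y - F (t, s))) < \<epsilon>"
      by (elim exE conjE)
    have "\<forall>x y. (x, y) \<in> N \<longrightarrow> (\<exists>U V. openin I U \<and> openin J V \<and> x \<in> U \<and> y \<in> V \<and> U \<times> V \<subseteq> N)"
      using iffD1[OF openin_prod_topology_alt N(1)] .
    then have "\<exists>U V. openin I U \<and> openin J V \<and> t \<in> U \<and> s \<in> V \<and> U \<times> V \<subseteq> N" using N(2) by blast
    then obtain U V where UV: "openin I U" "openin J V" "t \<in> U" "s \<in> V" "U \<times> V \<subseteq> N"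
      by (elim exE conjE)
    show ?thesis
    proof (intro exI[of _ U] exI[of _ V] conjI ballI)
      show "openin I U" "openin J V" "t \<in> U" "s \<in> V" using UV by auto
      fix t' s' assume "t' \<in> U" "s' \<in> V"
      then have "(t', s') \<in> N" using UV(5) by blast
      then show "r (F (t', s') - F (t, s)) < \<epsilon>" using N(3) unfolding r_def by blast
    qed
  qed

  have tube: "\<exists>A B. openin I A \<and> t \<in> A \<and> openin J B \<and> K2 \<subseteq> B \<and>
      (\<forall>t'\<in>A. \<forall>s\<in>B. r (F (t', s) - F (t, s)) < \<eta> / 2)" if t: "t \<in> K1" for t
  proof -
    have tI: "t \<in> topspace I" using t K1I by blast
    have e4: "\<eta> / 4 > 0" using eta by simp
    have "\<forall>s\<in>K2. \<exists>U V. openin I U \<and> openin J V \<and> t \<in> U \<and> s \<in> V \<and>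
              (\<forall>t'\<in>U. \<forall>s'\<in>V. r (F (t', s') - F (t, s)) < \<eta> / 4)"
    proof
      fix s assume "s \<in> K2"
      then have sJ: "s \<in> topspace J" using K2J by blast
      show "\<exists>U V. openin I U \<and> openin J V \<and> t \<in> U \<and> s \<in> V \<and>
              (\<forall>t'\<in>U. \<forall>s'\<in>V. r (F (t', s') - F (t, s)) < \<eta> / 4)"
        by (rule nb[OF tI sJ e4])
    qed
    from bchoice[OF this] obtain U where "\<forall>s\<in>K2. \<exists>V. openin I (U s) \<and> openin J V \<and> t \<in> U s \<and> s \<in> V \<and>
              (\<forall>t'\<in>U s. \<forall>s'\<in>V. r (F (t', s') - F (t, s)) < \<eta> / 4)" by (elim exE)
    from bchoice[OF this] obtain V where UV: "\<forall>s\<in>K2. openin I (U s) \<and> openin J (V s) \<and> t \<in> U s \<and> s \<in> V s \<and>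
              (\<forall>t'\<in>U s. \<forall>s'\<in>V s. r (F (t', s') - F (t, s)) < \<eta> / 4)" by (elim exE)
    have "\<forall>s\<in>K2. openin J (V s) \<and> s \<in> V s" using UV by blast
    then obtain S0 where S0: "S0 \<subseteq> K2" "finite S0" "K2 \<subseteq> \<Union>(V ` S0)"
      by (rule compact_cover_finite[OF K2])
    define A where "A = topspace I \<inter> \<Inter>(U ` S0)"
    define B where "B = \<Union>(V ` S0)"
    show ?thesis
    proof (intro exI[of _ A] exI[of _ B] conjI ballI)
      show "openin I A" unfolding A_def using UV S0(1,2) by (intro openin_Int_Inter) auto
      show "t \<in> A" unfolding A_def using UV S0(1) tI by auto
      show "openin J B" unfolding B_def using UV S0(1) by (intro openin_Union) auto
      show "K2 \<subseteq> B" unfolding B_def using S0(3) .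
      fix t' s assume t': "t' \<in> A" and s: "s \<in> B"
      then obtain s0 where s0: "s0 \<in> S0" "s \<in> V s0" unfolding B_def by blast
      have s0K: "s0 \<in> K2" using s0(1) S0(1) by blast
      have U0: "openin I (U s0) \<and> openin J (V s0) \<and> t \<in> U s0 \<and> s0 \<in> V s0 \<and>
              (\<forall>t'\<in>U s0. \<forall>s'\<in>V s0. r (F (t', s') - F (t, s0)) < \<eta> / 4)" using UV s0K by (rule bspec)
      have "t' \<in> U s0" using t' s0(1) unfolding A_def by blast
      then have 1: "r (F (t', s) - F (t, s0)) < \<eta> / 4" using U0 s0(2) by blast
      have 2: "r (F (t, s) - F (t, s0)) < \<eta> / 4" using U0 s0(2) by blast
      have "r (F (t', s) - F (t, s)) \<le> r (F (t', s) - F (t, s0)) + r (F (t, s0) - F (t, s))" by (rule rtri)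
      also have "r (F (t, s0) - F (t, s)) = r (F (t, s) - F (t, s0))" by (rule rcomm)
      finally show "r (F (t', s) - F (t, s)) < \<eta> / 2" using 1 2 by linarith
    qed
  qed
  have "\<forall>t\<in>K1. \<exists>A B. openin I A \<and> t \<in> A \<and> openin J B \<and> K2 \<subseteq> B \<and>
      (\<forall>t'\<in>A. \<forall>s\<in>B. r (F (t', s) - F (t, s)) < \<eta> / 2)" by (intro ballI tube)
  from bchoice[OF this] obtain A where "\<forall>t\<in>K1. \<exists>B. openin I (A t) \<and> t \<in> A t \<and> openin J B \<and> K2 \<subseteq> B \<and>
      (\<forall>t'\<in>A t. \<forall>s\<in>B. r (F (t', s) - F (t, s)) < \<eta> / 2)" by (elim exE)
  from bchoice[OF this] obtain B where AB: "\<forall>t\<in>K1. openin I (A t) \<and> t \<in> A t \<and> openin J (B t) \<and> K2 \<subseteq> B t \<and>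
      (\<forall>t'\<in>A t. \<forall>s\<in>B t. r (F (t', s) - F (t, s)) < \<eta> / 2)" by (elim exE)
  have "\<forall>t\<in>K1. openin I (A t \<inter> O1) \<and> t \<in> A t \<inter> O1" using AB O1 by blast
  from partition[OF CRI K1 this] obtain T1 \<alpha> where T1: "finite T1" "T1 \<subseteq> K1"
    "\<forall>i\<in>T1. continuous_map I euclideanreal (\<alpha> i)" "\<forall>i\<in>T1. \<forall>x\<in>topspace I. 0 \<le> \<alpha> i x"
    "\<forall>i\<in>T1. \<forall>x\<in>topspace I. x \<notin> A i \<inter> O1 \<longrightarrow> \<alpha> i x = 0"
    "\<forall>x\<in>topspace I. (\<Sum>i\<in>T1. \<alpha> i x) \<le> 1" "\<forall>x\<in>K1. (\<Sum>i\<in>T1. \<alpha> i x) = 1"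
    by (elim exE conjE)
  define Bs where "Bs = topspace J \<inter> \<Inter>(B ` T1)"
  have Bso: "openin J Bs" unfolding Bs_def using AB T1(1,2) by (intro openin_Int_Inter) auto
  have K2Bs: "K2 \<subseteq> Bs" unfolding Bs_def using AB T1(2) K2J by blast
  have T1I: "T1 \<subseteq> topspace I" using T1(2) K1I by blast

  have nb2: "\<exists>C. openin J C \<and> s \<in> C \<and> (\<forall>s'\<in>C. \<forall>i\<in>T1. r (F (i, s') - F (i, s)) < \<eta> / 2)"
    if s: "s \<in> K2" for s
  proof -
    have sJ: "s \<in> topspace J" using s K2J by blast
    have e2: "\<eta> / 2 > 0" using eta by simp
    have "\<forall>i\<in>T1. \<exists>V. openin J V \<and> s \<in> V \<and> (\<forall>s'\<in>V. r (F (i, s') - F (i, s)) < \<eta> / 2)"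
    proof
      fix i assume i: "i \<in> T1"
      then have iI: "i \<in> topspace I" using T1I by blast
      from nb[OF iI sJ e2] obtain U V where UV: "openin I U" "openin J V" "i \<in> U" "s \<in> V"
        "\<forall>t'\<in>U. \<forall>s'\<in>V. r (F (t', s') - F (i, s)) < \<eta> / 2" by (elim exE conjE)
      show "\<exists>V. openin J V \<and> s \<in> V \<and> (\<forall>s'\<in>V. r (F (i, s') - F (i, s)) < \<eta> / 2)"
      proof (intro exI[of _ V] conjI ballI)
        show "openin J V" "s \<in> V" using UV by auto
        fix s' assume "s' \<in> V"
        then show "r (F (i, s') - F (i, s)) < \<eta> / 2" using UV(3,5) by blast
      qed
    qed
    from bchoice[OF this] obtain VV where VV: "\<forall>i\<in>T1. openin J (VV i) \<and> s \<in> VV i \<and>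
        (\<forall>s'\<in>VV i. r (F (i, s') - F (i, s)) < \<eta> / 2)" by (elim exE)
    show ?thesis
    proof (intro exI[of _ "topspace J \<inter> \<Inter>(VV ` T1)"] conjI ballI)
      show "openin J (topspace J \<inter> \<Inter>(VV ` T1))" using VV T1(1) by (intro openin_Int_Inter) auto
      show "s \<in> topspace J \<inter> \<Inter>(VV ` T1)" using VV sJ by auto
      fix s' i assume s': "s' \<in> topspace J \<inter> \<Inter>(VV ` T1)" and i: "i \<in> T1"
      then have "s' \<in> VV i" by blast
      then show "r (F (i, s') - F (i, s)) < \<eta> / 2" using VV i by blast
    qed
  qed
  have "\<forall>s\<in>K2. \<exists>C. openin J C \<and> s \<in> C \<and> (\<forall>s'\<in>C. \<forall>i\<in>T1. r (F (i, s') - F (i, s)) < \<eta> / 2)"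
    by (intro ballI nb2)
  from bchoice[OF this] obtain Cf where Cf: "\<forall>s\<in>K2. openin J (Cf s) \<and> s \<in> Cf s \<and>
      (\<forall>s'\<in>Cf s. \<forall>i\<in>T1. r (F (i, s') - F (i, s)) < \<eta> / 2)" by (elim exE)
  have "\<forall>s\<in>K2. openin J (Cf s \<inter> Bs \<inter> O2) \<and> s \<in> Cf s \<inter> Bs \<inter> O2"
    using Cf Bso O2 K2Bs by blast
  from partition[OF CRJ K2 this] obtain T2 \<beta> where T2: "finite T2" "T2 \<subseteq> K2"
    "\<forall>j\<in>T2. continuous_map J euclideanreal (\<beta> j)" "\<forall>j\<in>T2. \<forall>x\<in>topspace J. 0 \<le> \<beta> j x"
    "\<forall>j\<in>T2. \<forall>x\<in>topspace J. x \<notin> Cf j \<inter> Bs \<inter> O2 \<longrightarrow> \<beta> j x = 0"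
    "\<forall>x\<in>topspace J. (\<Sum>j\<in>T2. \<beta> j x) \<le> 1" "\<forall>x\<in>K2. (\<Sum>j\<in>T2. \<beta> j x) = 1"
    by (elim exE conjE)

  have T2J: "T2 \<subseteq> topspace J" using T2(2) K2J by blast
  have \<alpha>le: "\<alpha> i t \<le> 1" if i: "i \<in> T1" and t: "t \<in> topspace I" for i t
  proof -
    have "\<alpha> i t \<le> (\<Sum>i\<in>T1. \<alpha> i t)" using i t T1(1,4) by (intro member_le_sum) auto
    then show ?thesis using T1(6) t by fastforce
  qed
  have \<beta>le: "\<beta> j s \<le> 1" if j: "j \<in> T2" and s: "s \<in> topspace J" for j s
  proof -
    have "\<beta> j s \<le> (\<Sum>j\<in>T2. \<beta> j s)" using j s T2(1,4) by (intro member_le_sum) auto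
    then show ?thesis using T2(6) s by fastforce
  qed
  obtain nn cc xx yy where rep: "\<forall>z. z = (\<Sum>k<(nn z::nat). sZ (cc z k) (tp (xx z k) (yy z k)))"
    by (rule tp_rep_fun[OF tensor])
  define aX where "aX i x = (\<lambda>t. if t \<in> topspace I then sX (complex_of_real (\<alpha> i t)) x else 0)" for i x
  define aY where "aY j y = (\<lambda>s. if s \<in> topspace J then sY (complex_of_real (\<beta> j s)) y else 0)" for j y
  define wij where "wij i j = (\<lambda>u. \<Sum>k<nn (F (i, j)). sZ (cc (F (i, j)) k)
      (tensor_fun tp (aX i (xx (F (i, j)) k)) (aY j (yy (F (i, j)) k)) u))" for i j
  define w where "w = (\<lambda>u. \<Sum>i\<in>T1. \<Sum>j\<in>T2. wij i j u)"
  have aXat: "aX i x \<in> atoms I O1 sX" if i: "i \<in> T1" for i x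
    unfolding aX_def
  proof (rule atoms_intro)
    show "continuous_map I euclideanreal (\<alpha> i)" using T1(3) i by blast
    show "\<forall>t\<in>topspace I. 0 \<le> \<alpha> i t \<and> \<alpha> i t \<le> 1 \<and> (t \<notin> O1 \<longrightarrow> \<alpha> i t = 0)"
      using T1(4,5) i \<alpha>le by blast
  qed
  have aYat: "aY j y \<in> atoms J O2 sY" if j: "j \<in> T2" for j y
    unfolding aY_def
  proof (rule atoms_intro)
    show "continuous_map J euclideanreal (\<beta> j)" using T2(3) j by blast
    show "\<forall>s\<in>topspace J. 0 \<le> \<beta> j s \<and> \<beta> j s \<le> 1 \<and> (s \<notin> O2 \<longrightarrow> \<beta> j s = 0)"
      using T2(4,5) j \<beta>le by blast
  qed
  have wij_mem: "wij i j \<in> tensor_span sZ tp (atoms I O1 sX) (atoms J O2 sY)" if i: "i \<in> T1" and j: "j \<in> T2" for i j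
    unfolding wij_def by (rule ts_intro) (use aXat[OF i] aYat[OF j] in blast)
  have wmem: "w \<in> tensor_span sZ tp (atoms I O1 sX) (atoms J O2 sY)"
    unfolding w_def
  proof (rule ts_sum[of T1 "\<lambda>i u. \<Sum>j\<in>T2. wij i j u", simplified])
    show "finite T1" by (rule T1(1))
    fix i assume i: "i \<in> T1"
    show "(\<lambda>u. \<Sum>j\<in>T2. wij i j u) \<in> tensor_span sZ tp (atoms I O1 sX) (atoms J O2 sY)"
      by (rule ts_sum[of T2 "\<lambda>j u. wij i j u", simplified]) (use T2(1) wij_mem[OF i] in auto)
  qed
  have wij_val: "wij i j (t, s) = sZ (complex_of_real (\<alpha> i t * \<beta> j s)) (F (i, j))"
    if t: "t \<in> topspace I" and s: "s \<in> topspace J" for i j t s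
  proof -
    define z where "z = F (i, j)"
    have "wij i j (t, s) = (\<Sum>k<nn z. sZ (cc z k) (sZ (complex_of_real (\<alpha> i t) * complex_of_real (\<beta> j s)) (tp (xx z k) (yy z k))))"
      unfolding wij_def z_def[symmetric] tensor_fun_apply aX_def aY_def using t s
      by (simp add: tp_scale2[OF tensor] del: MZ.scale_scale)
    also have "\<dots> = (\<Sum>k<nn z. sZ (complex_of_real (\<alpha> i t * \<beta> j s)) (sZ (cc z k) (tp (xx z k) (yy z k))))"
      by (rule sum.cong) (simp_all add: mult.commute)
    also have "\<dots> = sZ (complex_of_real (\<alpha> i t * \<beta> j s)) (\<Sum>k<nn z. sZ (cc z k) (tp (xx z k) (yy z k)))"
      by (simp only: MZ.scale_sum_right)
    also have "(\<Sum>k<nn z. sZ (cc z k) (tp (xx z k) (yy z k))) = z" using rep by metis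
    finally show ?thesis unfolding z_def .
  qed
  have wval: "w (t, s) = (\<Sum>i\<in>T1. \<Sum>j\<in>T2. sZ (complex_of_real (\<alpha> i t * \<beta> j s)) (F (i, j)))"
    if t: "t \<in> topspace I" and s: "s \<in> topspace J" for t s
    unfolding w_def using wij_val[OF t s] by simp
  have est: "r (w (t, s) - sZ (complex_of_real ((\<Sum>i\<in>T1. \<alpha> i t) * (\<Sum>j\<in>T2. \<beta> j s))) (F (t, s)))
      \<le> (\<Sum>i\<in>T1. \<alpha> i t) * (\<Sum>j\<in>T2. \<beta> j s) * \<eta>"
    if t: "t \<in> topspace I" and s: "s \<in> topspace J" for t s
    unfolding wval[OF t s]
  proof (rule double_sum_est[OF vsZ snr T1(1) T2(1)])
    show "\<And>i. i \<in> T1 \<Longrightarrow> 0 \<le> \<alpha> i t" using T1(4) t by blast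
    show "\<And>j. j \<in> T2 \<Longrightarrow> 0 \<le> \<beta> j s" using T2(4) s by blast
    show "0 \<le> \<eta>" using eta by simp
    fix i j assume i: "i \<in> T1" and j: "j \<in> T2" and ai: "0 < \<alpha> i t" and bj: "0 < \<beta> j s"
    have tA: "t \<in> A i" using T1(5) i t ai by force
    have sC: "s \<in> Cf j" and sBs: "s \<in> Bs" using T2(5) j s bj by force+
    have iK: "i \<in> K1" and jK: "j \<in> K2" using i j T1(2) T2(2) by auto
    have sB: "s \<in> B i" using sBs i unfolding Bs_def by blast
    have ABi: "\<forall>t'\<in>A i. \<forall>s\<in>B i. r (F (t', s) - F (i, s)) < \<eta> / 2" using AB iK by blast
    have 1: "r (F (t, s) - F (i, s)) < \<eta> / 2" using ABi tA sB by blast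
    have Cj: "\<forall>s'\<in>Cf j. \<forall>i\<in>T1. r (F (i, s') - F (i, j)) < \<eta> / 2" using Cf jK by blast
    have 2: "r (F (i, s) - F (i, j)) < \<eta> / 2" using Cj sC i by blast
    have "r (F (i, j) - F (t, s)) \<le> r (F (i, j) - F (i, s)) + r (F (i, s) - F (t, s))" by (rule rtri)
    also have "r (F (i, j) - F (i, s)) = r (F (i, s) - F (i, j))" by (rule rcomm)
    also have "r (F (i, s) - F (t, s)) = r (F (t, s) - F (i, s))" by (rule rcomm)
    finally show "r (F (i, j) - F (t, s)) \<le> \<eta>" using 1 2 by linarith
  qed
  show ?thesis
  proof (intro bexI[of _ w] conjI ballI)
    show "w \<in> tensor_span sZ tp (atoms I O1 sX) (atoms J O2 sY)" by (rule wmem)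
  next
    fix t s assume t: "t \<in> K1" and s: "s \<in> K2"
    have tI: "t \<in> topspace I" and sJ: "s \<in> topspace J" using t s K1I K2J by auto
    have "(\<Sum>i\<in>T1. \<alpha> i t) = 1" "(\<Sum>j\<in>T2. \<beta> j s) = 1" using T1(7) T2(7) t s by auto
    then have "r (w (t, s) - F (t, s)) \<le> \<eta>" using est[OF tI sJ] by simp
    then show "(\<Sum>p\<in>P. p (F (t, s) - w (t, s))) \<le> \<eta>" using rcomm unfolding r_def by metis
  next
    fix t s p assume t: "t \<in> topspace I" and s: "s \<in> topspace J" and p: "p \<in> P"
    define L where "L = (\<Sum>i\<in>T1. \<alpha> i t) * (\<Sum>j\<in>T2. \<beta> j s)"
    have L0: "0 \<le> L" unfolding L_def using T1(4) T2(4) t s by (intro mult_nonneg_nonneg sum_nonneg) auto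
    have L1: "L \<le> 1" unfolding L_def using T1(6) T2(6) t s L0
      by (intro mult_le_one sum_nonneg) (use T1(4) T2(4) in auto)
    have snp: "seminorm sZ p" by (rule snP[OF p])
    have pF: "p (F (t, s)) \<ge> 0" by (rule sn_nonneg[OF vsZ snp])
    have "p (w (t, s)) \<le> p (sZ (complex_of_real L) (F (t, s))) + p (w (t, s) - sZ (complex_of_real L) (F (t, s)))"
      by (rule sn_sub_le[OF vsZ snp])
    also have "p (sZ (complex_of_real L) (F (t, s))) = L * p (F (t, s))"
      using sn_scale_real[OF vsZ snp] L0 by simp
    also have "\<dots> \<le> p (F (t, s))" using mult_right_mono[OF L1 pF] by simp
    also have "p (w (t, s) - sZ (complex_of_real L) (F (t, s))) \<le> r (w (t, s) - sZ (complex_of_real L) (F (t, s)))"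
      unfolding r_def by (rule sum_seminorm_ge[OF vsZ snP P(1) p])
    also have "\<dots> \<le> L * \<eta>" using est[OF t s] unfolding L_def .
    also have "\<dots> \<le> \<eta>" using mult_right_mono[OF L1, of \<eta>] eta by simp
    finally show "p (w (t, s)) \<le> p (F (t, s)) + \<eta>" by simp
  qed
qed

end



lemma ssup_le:
  assumes "B \<ge> 0" "\<And>x. x \<in> S \<Longrightarrow> h x \<le> B"
  shows "ssup S h \<le> B"
  unfolding ssup_def using assms by (intro cSup_least) auto

lemma closure_eq:
  assumes "\<And>F P e. F \<in> M \<Longrightarrow> finite P \<Longrightarrow> P \<subseteq> S \<Longrightarrow> e > 0 \<Longrightarrow> \<exists>w\<in>W. \<forall>q\<in>P. q (\<lambda>u. F u - w u) < e"
  shows "closure_in_fs S M W = M"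
  unfolding closure_in_fs_def using assms by blast

lemma sn_diff_le:
  assumes "vector_space s" "seminorm s p"
  shows "p (a - b) \<le> p a + p b"
  using sn_add[OF assms, of a "- b"] sn_neg[OF assms, of b] by simp

lemma compact_fst: "compactin (prod_topology I J) K \<Longrightarrow> compactin I (fst ` K)"
  by (rule image_compactin[OF _ continuous_map_fst])
lemma compact_snd: "compactin (prod_topology I J) K \<Longrightarrow> compactin J (snd ` K)"
  by (rule image_compactin[OF _ continuous_map_snd])

lemma lc_nbhd:
  assumes "locally_compact_space X" "compactin X K"
  shows "\<exists>U D. openin X U \<and> compactin X D \<and> K \<subseteq> U \<and> U \<subseteq> D"
proof -
  have KX: "K \<subseteq> topspace X" using compactin_subset_topspace[OF assms(2)] .
  have "\<forall>x\<in>K. \<exists>U D. openin X U \<and> compactin X D \<and> x \<in> U \<and> U \<subseteq> D"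
    using assms(1) KX unfolding locally_compact_space_def by blast
  from bchoice[OF this] obtain U where "\<forall>x\<in>K. \<exists>D. openin X (U x) \<and> compactin X D \<and> x \<in> U x \<and> U x \<subseteq> D"
    by (elim exE)
  from bchoice[OF this] obtain D where UD: "\<forall>x\<in>K. openin X (U x) \<and> compactin X (D x) \<and> x \<in> U x \<and> U x \<subseteq> D x"
    by (elim exE)
  have "\<forall>x\<in>K. openin X (U x) \<and> x \<in> U x" using UD by blast
  then obtain S0 where S0: "S0 \<subseteq> K" "finite S0" "K \<subseteq> \<Union>(U ` S0)" by (rule compact_cover_finite[OF assms(2)])
  show ?thesis
  proof (rule exI[of _ "\<Union>(U ` S0)"], rule exI[of _ "\<Union>(D ` S0)"], intro conjI)
    show "openin X (\<Union>(U ` S0))" using UD S0(1) by (intro openin_Union) auto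
    show "compactin X (\<Union>(D ` S0))" using UD S0(1,2) by (intro compactin_Union) auto
    show "K \<subseteq> \<Union>(U ` S0)" by (rule S0(3))
    show "\<Union>(U ` S0) \<subseteq> \<Union>(D ` S0)" using UD S0(1) by blast
  qed
qed

context
  fixes I :: "'i topology" and J :: "'j topology"
    and sX :: "complex \<Rightarrow> 'x::ab_group_add \<Rightarrow> 'x" and AX :: "('x \<Rightarrow> real) set"
    and sY :: "complex \<Rightarrow> 'y::ab_group_add \<Rightarrow> 'y" and AY :: "('y \<Rightarrow> real) set"
    and sZ :: "complex \<Rightarrow> 'z::ab_group_add \<Rightarrow> 'z" and AZ :: "('z \<Rightarrow> real) set"
    and tp :: "'x \<Rightarrow> 'y \<Rightarrow> 'z"
  assumes X: "hlcs sX AX" and Y: "hlcs sY AY" and Z: "hlcs sZ AZ"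
    and tensor: "alg_tensor sX sY sZ tp"
    and CRI: "completely_regular_space I" and CRJ: "completely_regular_space J"
begin

lemma approx_compact:
  assumes F: "F \<in> Cfun (prod_topology I J) AZ" and K: "compactin (prod_topology I J) K"
    and P: "finite P" "P \<subseteq> AZ" and eta: "\<eta> > 0"
  shows "\<exists>w\<in>tensor_span sZ tp (Cfun I AX) (Cfun J AY). \<forall>u\<in>K. \<forall>p\<in>P. p (F u - w u) \<le> \<eta>"
proof -
  have vsZ: "vector_space sZ" using hlcs_vs[OF Z] .
  have snP: "\<And>p. p \<in> P \<Longrightarrow> seminorm sZ p" using P(2) hlcs_sn[OF Z] by blast
  have K1: "compactin I (fst ` K)" by (rule compact_fst[OF K])
  have K2: "compactin J (snd ` K)" by (rule compact_snd[OF K])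
  have O1: "openin I (topspace I)" "fst ` K \<subseteq> topspace I" using compactin_subset_topspace[OF K1] by auto
  have O2: "openin J (topspace J)" "snd ` K \<subseteq> topspace J" using compactin_subset_topspace[OF K2] by auto
  from core[OF X Y Z tensor CRI CRJ F P K1 K2 O1 O2 eta] obtain w where
    w: "w \<in> tensor_span sZ tp (atoms I (topspace I) sX) (atoms J (topspace J) sY)"
       "\<forall>t\<in>fst ` K. \<forall>s\<in>snd ` K. (\<Sum>p\<in>P. p (F (t, s) - w (t, s))) \<le> \<eta>"
    by blast
  have "tensor_span sZ tp (atoms I (topspace I) sX) (atoms J (topspace J) sY) \<subseteq> tensor_span sZ tp (Cfun I AX) (Cfun J AY)"
    by (intro ts_mono atoms_Cfun X Y)
  then have wm: "w \<in> tensor_span sZ tp (Cfun I AX) (Cfun J AY)" using w(1) by blast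
  show ?thesis
  proof (intro bexI[OF _ wm] ballI)
    fix u p assume u: "u \<in> K" and p: "p \<in> P"
    obtain t s where ts: "u = (t, s)" by (cases u)
    have "t \<in> fst ` K" "s \<in> snd ` K" using u ts by force+
    then have "(\<Sum>p\<in>P. p (F (t, s) - w (t, s))) \<le> \<eta>" using w(2) by blast
    moreover have "p (F (t, s) - w (t, s)) \<le> (\<Sum>p\<in>P. p (F (t, s) - w (t, s)))"
      by (rule sum_seminorm_ge[OF vsZ snP P(1) p])
    ultimately show "p (F u - w u) \<le> \<eta>" unfolding ts by linarith
  qed
qed

lemma closure_compact_open:
  "closure_in_fs (compact_open_seminorms (prod_topology I J) AZ) (Cfun (prod_topology I J) AZ)
      (tensor_span sZ tp (Cfun I AX) (Cfun J AY)) = Cfun (prod_topology I J) AZ"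
proof (rule closure_eq)
  fix F P e assume F: "F \<in> Cfun (prod_topology I J) AZ" and P: "finite P"
    and PS: "P \<subseteq> compact_open_seminorms (prod_topology I J) AZ" and e: "(e::real) > 0"
  have "\<forall>q\<in>P. \<exists>p K. q = (\<lambda>f. ssup K (\<lambda>x. p (f x))) \<and> p \<in> AZ \<and> compactin (prod_topology I J) K"
    using PS unfolding compact_open_seminorms_def by blast
  from bchoice[OF this] obtain pp where "\<forall>q\<in>P. \<exists>K. q = (\<lambda>f. ssup K (\<lambda>x. pp q (f x))) \<and> pp q \<in> AZ \<and> compactin (prod_topology I J) K"
    by (elim exE)
  from bchoice[OF this] obtain KK where PK: "\<forall>q\<in>P. q = (\<lambda>f. ssup (KK q) (\<lambda>x. pp q (f x))) \<and> pp q \<in> AZ \<and> compactin (prod_topology I J) (KK q)"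
    by (elim exE)
  have Kc: "compactin (prod_topology I J) (\<Union>(KK ` P))" using PK P by (intro compactin_Union) auto
  have Pf: "finite (pp ` P)" "pp ` P \<subseteq> AZ" using P PK by auto
  have e2: "e / 2 > 0" using e by simp
  from approx_compact[OF F Kc Pf e2] obtain w where
    w: "w \<in> tensor_span sZ tp (Cfun I AX) (Cfun J AY)" "\<forall>u\<in>\<Union>(KK ` P). \<forall>p\<in>pp ` P. p (F u - w u) \<le> e / 2"
    by blast
  show "\<exists>w\<in>tensor_span sZ tp (Cfun I AX) (Cfun J AY). \<forall>q\<in>P. q (\<lambda>u. F u - w u) < e"
  proof (intro bexI[OF _ w(1)] ballI)
    fix q assume q: "q \<in> P"
    have qe: "q = (\<lambda>f. ssup (KK q) (\<lambda>x. pp q (f x)))" using PK q by blast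
    have "ssup (KK q) (\<lambda>x. pp q (F x - w x)) \<le> e / 2"
    proof (rule ssup_le)
      show "0 \<le> e / 2" using e by simp
      fix x assume "x \<in> KK q"
      then show "pp q (F x - w x) \<le> e / 2" using w(2) q by blast
    qed
    then show "q (\<lambda>u. F u - w u) < e" using e by (subst qe) simp
  qed
qed

lemma closure_point_open:
  "closure_in_fs (point_open_seminorms (prod_topology I J) AZ) (Cfun (prod_topology I J) AZ)
      (tensor_span sZ tp (Cfun I AX) (Cfun J AY)) = Cfun (prod_topology I J) AZ"
proof (rule closure_eq)
  fix F P e assume F: "F \<in> Cfun (prod_topology I J) AZ" and P: "finite P"
    and PS: "P \<subseteq> point_open_seminorms (prod_topology I J) AZ" and e: "(e::real) > 0"
  have "\<forall>q\<in>P. \<exists>p K. q = (\<lambda>f. ssup K (\<lambda>x. p (f x))) \<and> p \<in> AZ \<and> finite K \<and> K \<subseteq> topspace (prod_topology I J)"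
    using PS unfolding point_open_seminorms_def by blast
  from bchoice[OF this] obtain pp where "\<forall>q\<in>P. \<exists>K. q = (\<lambda>f. ssup K (\<lambda>x. pp q (f x))) \<and> pp q \<in> AZ \<and> finite K \<and> K \<subseteq> topspace (prod_topology I J)"
    by (elim exE)
  from bchoice[OF this] obtain KK where PK: "\<forall>q\<in>P. q = (\<lambda>f. ssup (KK q) (\<lambda>x. pp q (f x))) \<and> pp q \<in> AZ \<and> finite (KK q) \<and> KK q \<subseteq> topspace (prod_topology I J)"
    by (elim exE)
  have Kc: "compactin (prod_topology I J) (\<Union>(KK ` P))" using PK P by (intro compactin_Union finite_imp_compactin) auto
  have Pf: "finite (pp ` P)" "pp ` P \<subseteq> AZ" using P PK by auto
  have e2: "e / 2 > 0" using e by simp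
  from approx_compact[OF F Kc Pf e2] obtain w where
    w: "w \<in> tensor_span sZ tp (Cfun I AX) (Cfun J AY)" "\<forall>u\<in>\<Union>(KK ` P). \<forall>p\<in>pp ` P. p (F u - w u) \<le> e / 2"
    by blast
  show "\<exists>w\<in>tensor_span sZ tp (Cfun I AX) (Cfun J AY). \<forall>q\<in>P. q (\<lambda>u. F u - w u) < e"
  proof (intro bexI[OF _ w(1)] ballI)
    fix q assume q: "q \<in> P"
    have qe: "q = (\<lambda>f. ssup (KK q) (\<lambda>x. pp q (f x)))" using PK q by blast
    have "ssup (KK q) (\<lambda>x. pp q (F x - w x)) \<le> e / 2"
    proof (rule ssup_le)
      show "0 \<le> e / 2" using e by simp
      fix x assume "x \<in> KK q"
      then show "pp q (F x - w x) \<le> e / 2" using w(2) q by blast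
    qed
    then show "q (\<lambda>u. F u - w u) < e" using e by (subst qe) simp
  qed
qed

end



lemma weight_bound:
  assumes "strict_weight X v"
  shows "\<exists>V. \<forall>x\<in>topspace X. v x \<le> V"
proof -
  have w2: "usc X v" and w3: "\<forall>e>0. compactin X (X closure_of {x \<in> topspace X. \<bar>v x\<bar> \<ge> e})"
    using assms unfolding strict_weight_def by auto
  define C where "C = X closure_of {x \<in> topspace X. \<bar>v x\<bar> \<ge> 1}"
  have Cc: "compactin X C" unfolding C_def using w3 by simp
  have "\<forall>x\<in>C. \<exists>N. openin X N \<and> x \<in> N \<and> (\<forall>y\<in>N. v y \<le> v x + 1)"
  proof
    fix x assume "x \<in> C"
    then have x: "x \<in> topspace X" unfolding C_def by (rule subsetD[OF closure_of_subset_topspace])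
    show "\<exists>N. openin X N \<and> x \<in> N \<and> (\<forall>y\<in>N. v y \<le> v x + 1)"
    proof (intro exI[of _ "{y \<in> topspace X. v y < v x + 1}"] conjI ballI)
      show "openin X {y \<in> topspace X. v y < v x + 1}" using w2 unfolding usc_def by blast
      show "x \<in> {y \<in> topspace X. v y < v x + 1}" using x by simp
      fix y assume "y \<in> {y \<in> topspace X. v y < v x + 1}"
      then show "v y \<le> v x + 1" by simp
    qed
  qed
  from compact_bound[OF Cc this] obtain M where M: "\<forall>y\<in>C. v y \<le> M" by (elim exE)
  show ?thesis
  proof (intro exI[of _ "max M 1"] ballI)
    fix x assume x: "x \<in> topspace X"
    show "v x \<le> max M 1"
    proof (cases "x \<in> C")
      case True then show ?thesis using M by fastforce
    next
      case False
      have "{x \<in> topspace X. \<bar>v x\<bar> \<ge> 1} \<subseteq> C" unfolding C_def by (rule closure_of_subset) auto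
      then have "\<bar>v x\<bar> < 1" using False x by auto
      then show ?thesis by simp
    qed
  qed
qed

context
  fixes I :: "'i topology" and J :: "'j topology"
    and sX :: "complex \<Rightarrow> 'x::ab_group_add \<Rightarrow> 'x" and AX :: "('x \<Rightarrow> real) set"
    and sY :: "complex \<Rightarrow> 'y::ab_group_add \<Rightarrow> 'y" and AY :: "('y \<Rightarrow> real) set"
    and sZ :: "complex \<Rightarrow> 'z::ab_group_add \<Rightarrow> 'z" and AZ :: "('z \<Rightarrow> real) set"
    and tp :: "'x \<Rightarrow> 'y \<Rightarrow> 'z"
  assumes X: "hlcs sX AX" and Y: "hlcs sY AY" and Z: "hlcs sZ AZ"
    and tensor: "alg_tensor sX sY sZ tp"
    and CRI: "completely_regular_space I" and CRJ: "completely_regular_space J"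
begin

lemma closure_strict:
  "closure_in_fs (strict_seminorms (prod_topology I J) AZ) (Cbfun (prod_topology I J) AZ)
      (tensor_span sZ tp (Cbfun I AX) (Cbfun J AY)) = Cbfun (prod_topology I J) AZ"
proof (rule closure_eq)
  fix F P e assume F: "F \<in> Cbfun (prod_topology I J) AZ" and P: "finite P"
    and PS: "P \<subseteq> strict_seminorms (prod_topology I J) AZ" and e: "(e::real) > 0"
  let ?T = "topspace (prod_topology I J)"
  have vsZ: "vector_space sZ" using hlcs_vs[OF Z] .
  have "\<forall>q\<in>P. \<exists>p v. q = (\<lambda>f. ssup ?T (\<lambda>x. v x * p (f x))) \<and> p \<in> AZ \<and> strict_weight (prod_topology I J) v"
    using PS unfolding strict_seminorms_def by blast
  from bchoice[OF this] obtain pp where "\<forall>q\<in>P. \<exists>v. q = (\<lambda>f. ssup ?T (\<lambda>x. v x * pp q (f x))) \<and> pp q \<in> AZ \<and> strict_weight (prod_topology I J) v"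
    by (elim exE)
  from bchoice[OF this] obtain vv where PV: "\<forall>q\<in>P. q = (\<lambda>f. ssup ?T (\<lambda>x. vv q x * pp q (f x))) \<and> pp q \<in> AZ \<and> strict_weight (prod_topology I J) (vv q)"
    by (elim exE)
  have FC: "F \<in> Cfun (prod_topology I J) AZ" using F unfolding Cbfun_iff by blast
  have "\<forall>q\<in>P. \<exists>M. \<forall>x\<in>?T. pp q (F x) \<le> M" using F PV unfolding Cbfun_iff by blast
  from bchoice[OF this] obtain MM where MM: "\<forall>q\<in>P. \<forall>x\<in>?T. pp q (F x) \<le> MM q" by (elim exE)
  have "\<forall>q\<in>P. \<exists>V. \<forall>x\<in>?T. vv q x \<le> V" using PV weight_bound by blast
  from bchoice[OF this] obtain VV where VV: "\<forall>q\<in>P. \<forall>x\<in>?T. vv q x \<le> VV q" by (elim exE)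
  define M where "M = (\<Sum>q\<in>P. \<bar>MM q\<bar>)"
  define V where "V = (\<Sum>q\<in>P. \<bar>VV q\<bar>) + 1"
  have M0: "M \<ge> 0" unfolding M_def by (intro sum_nonneg) auto
  have V1: "V \<ge> 1" unfolding V_def by (simp add: sum_nonneg)
  have Mle: "pp q (F x) \<le> M" if q: "q \<in> P" and x: "x \<in> ?T" for q x
  proof -
    have "pp q (F x) \<le> MM q" using MM q x by blast
    also have "\<dots> \<le> \<bar>MM q\<bar>" by simp
    also have "\<dots> \<le> M" unfolding M_def using q P by (intro member_le_sum) auto
    finally show ?thesis .
  qed
  have Vle: "vv q x \<le> V" if q: "q \<in> P" and x: "x \<in> ?T" for q x
  proof -
    have "vv q x \<le> VV q" using VV q x by blast
    also have "\<dots> \<le> \<bar>VV q\<bar>" by simp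
    also have "\<dots> \<le> (\<Sum>q\<in>P. \<bar>VV q\<bar>)" using q P by (intro member_le_sum) auto
    finally show ?thesis unfolding V_def by simp
  qed
  define \<eta> where "\<eta> = min 1 (e / (2 * V))"
  have eta: "\<eta> > 0" unfolding \<eta>_def using e V1 by simp
  have eta1: "\<eta> \<le> 1" unfolding \<eta>_def by simp
  have Veta: "V * \<eta> \<le> e / 2"
  proof -
    have "V * \<eta> \<le> V * (e / (2 * V))" unfolding \<eta>_def using V1 by (intro mult_left_mono) auto
    also have "\<dots> = e / 2" using V1 by simp
    finally show ?thesis .
  qed
  define \<delta> where "\<delta> = e / (2 * (2 * M + 1))"
  have delta: "\<delta> > 0" unfolding \<delta>_def using e M0 by simp
  have deltaM: "\<delta> * (2 * M + 1) = e / 2"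
  proof -
    have pos: "2 * M + 1 \<noteq> 0" using M0 by linarith
    have "\<delta> * (2 * M + 1) = (e * (2 * M + 1)) / (2 * (2 * M + 1))"
      unfolding \<delta>_def by (rule times_divide_eq_left)
    also have "\<dots> = e / 2" using pos by (rule nonzero_mult_divide_mult_cancel_right)
    finally show ?thesis .
  qed
  define KK where "KK q = prod_topology I J closure_of {x \<in> ?T. \<bar>vv q x\<bar> \<ge> \<delta>}" for q
  have KKc: "compactin (prod_topology I J) (KK q)" if q: "q \<in> P" for q
    using PV q delta unfolding KK_def strict_weight_def by blast
  define K where "K = \<Union>(KK ` P)"
  have Kc: "compactin (prod_topology I J) K" unfolding K_def using KKc P by (intro compactin_Union) auto
  have K1: "compactin I (fst ` K)" by (rule compact_fst[OF Kc])
  have K2: "compactin J (snd ` K)" by (rule compact_snd[OF Kc])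
  have O1: "openin I (topspace I)" "fst ` K \<subseteq> topspace I" using compactin_subset_topspace[OF K1] by auto
  have O2: "openin J (topspace J)" "snd ` K \<subseteq> topspace J" using compactin_subset_topspace[OF K2] by auto
  have Pf: "finite (pp ` P)" "pp ` P \<subseteq> AZ" using P PV by auto
  from core[OF X Y Z tensor CRI CRJ FC Pf K1 K2 O1 O2 eta] obtain w where
    w: "w \<in> tensor_span sZ tp (atoms I (topspace I) sX) (atoms J (topspace J) sY)"
       "\<forall>t\<in>fst ` K. \<forall>s\<in>snd ` K. (\<Sum>p\<in>pp ` P. p (F (t, s) - w (t, s))) \<le> \<eta>"
       "\<forall>t\<in>topspace I. \<forall>s\<in>topspace J. \<forall>p\<in>pp ` P. p (w (t, s)) \<le> p (F (t, s)) + \<eta>"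
    by blast
  have "tensor_span sZ tp (atoms I (topspace I) sX) (atoms J (topspace J) sY) \<subseteq> tensor_span sZ tp (Cbfun I AX) (Cbfun J AY)"
    by (intro ts_mono atoms_Cb X Y)
  then have wm: "w \<in> tensor_span sZ tp (Cbfun I AX) (Cbfun J AY)" using w(1) by blast
  show "\<exists>w\<in>tensor_span sZ tp (Cbfun I AX) (Cbfun J AY). \<forall>q\<in>P. q (\<lambda>u. F u - w u) < e"
  proof (intro bexI[OF _ wm] ballI)
    fix q assume q: "q \<in> P"
    have qe: "q = (\<lambda>f. ssup ?T (\<lambda>x. vv q x * pp q (f x)))" using PV q by blast
    have pq: "pp q \<in> pp ` P" using q by blast
    have snq: "seminorm sZ (pp q)" using hlcs_sn[OF Z] PV q by blast
    have snP: "\<And>p. p \<in> pp ` P \<Longrightarrow> seminorm sZ p" using hlcs_sn[OF Z] Pf(2) by blast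
    have vnn: "\<forall>x\<in>?T. vv q x \<ge> 0" using PV q unfolding strict_weight_def by blast
    have "ssup ?T (\<lambda>x. vv q x * pp q (F x - w x)) \<le> e / 2"
    proof (rule ssup_le)
      show "0 \<le> e / 2" using e by simp
      fix x assume x: "x \<in> ?T"
      obtain t s where ts: "x = (t, s)" by (cases x)
      have t: "t \<in> topspace I" and s: "s \<in> topspace J" using x ts by auto
      have v0: "vv q x \<ge> 0" using vnn x by blast
      have p0: "pp q (F x - w x) \<ge> 0" by (rule sn_nonneg[OF vsZ snq])
      show "vv q x * pp q (F x - w x) \<le> e / 2"
      proof (cases "x \<in> KK q")
        case True
        then have "x \<in> K" unfolding K_def using q by blast
        then have "t \<in> fst ` K" "s \<in> snd ` K" using ts by force+
        then have "(\<Sum>p\<in>pp ` P. p (F (t, s) - w (t, s))) \<le> \<eta>" using w(2) by blast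
        moreover have "pp q (F (t, s) - w (t, s)) \<le> (\<Sum>p\<in>pp ` P. p (F (t, s) - w (t, s)))"
          by (rule sum_seminorm_ge[OF vsZ snP Pf(1) pq])
        ultimately have pe: "pp q (F x - w x) \<le> \<eta>" unfolding ts by linarith
        have "vv q x * pp q (F x - w x) \<le> V * pp q (F x - w x)"
          using Vle[OF q x] p0 by (intro mult_right_mono) auto
        also have "\<dots> \<le> V * \<eta>" using pe V1 by (intro mult_left_mono) auto
        finally show ?thesis using Veta by linarith
      next
        case False
        have "{x \<in> ?T. \<bar>vv q x\<bar> \<ge> \<delta>} \<subseteq> KK q" unfolding KK_def by (rule closure_of_subset) auto
        then have "\<bar>vv q x\<bar> < \<delta>" using False x by auto
        then have vd: "vv q x \<le> \<delta>" by simp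
        have "pp q (F x - w x) \<le> pp q (F x) + pp q (w x)" by (rule sn_diff_le[OF vsZ snq])
        also have "pp q (w x) \<le> pp q (F x) + \<eta>" using w(3) t s pq unfolding ts by blast
        finally have "pp q (F x - w x) \<le> 2 * M + 1" using Mle[OF q x] eta1 by linarith
        then have "vv q x * pp q (F x - w x) \<le> \<delta> * (2 * M + 1)"
          using vd v0 p0 delta by (intro mult_mono) auto
        then show ?thesis using deltaM by simp
      qed
    qed
    then show "q (\<lambda>u. F u - w u) < e" using e by (subst qe) simp
  qed
qed

lemma closure_C0:
  assumes HI: "Hausdorff_space I" and HJ: "Hausdorff_space J"
    and LC: "locally_compact_space (prod_topology I J)"
  shows "closure_in_fs (uniform_seminorms (prod_topology I J) AZ) (C0fun (prod_topology I J) AZ)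
      (tensor_span sZ tp (C0fun I AX) (C0fun J AY)) = C0fun (prod_topology I J) AZ"
proof (rule closure_eq)
  fix F P e assume F: "F \<in> C0fun (prod_topology I J) AZ" and P: "finite P"
    and PS: "P \<subseteq> uniform_seminorms (prod_topology I J) AZ" and e: "(e::real) > 0"
  let ?T = "topspace (prod_topology I J)"
  have vsZ: "vector_space sZ" using hlcs_vs[OF Z] .
  have HP: "Hausdorff_space (prod_topology I J)" using HI HJ by (simp add: Hausdorff_space_prod_topology)
  have FC: "F \<in> Cfun (prod_topology I J) AZ" and Fv: "van (prod_topology I J) AZ F"
    using F C0fun_iff[OF HP] by auto
  have "\<forall>q\<in>P. \<exists>p. q = (\<lambda>f. ssup ?T (\<lambda>x. p (f x))) \<and> p \<in> AZ"
    using PS unfolding uniform_seminorms_def by blast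
  from bchoice[OF this] obtain pp where PP: "\<forall>q\<in>P. q = (\<lambda>f. ssup ?T (\<lambda>x. pp q (f x))) \<and> pp q \<in> AZ"
    by (elim exE)
  have e4: "e / 4 > 0" using e by simp
  have "\<forall>q\<in>P. \<exists>C. compactin (prod_topology I J) C \<and> (\<forall>x\<in>?T. x \<notin> C \<longrightarrow> pp q (F x) < e / 4)"
  proof
    fix q assume q: "q \<in> P"
    have "pp q \<in> AZ" using PP q by blast
    from vanD[OF Fv this e4] obtain C where "compactin (prod_topology I J) C"
      "\<And>x. x \<in> ?T \<Longrightarrow> x \<notin> C \<Longrightarrow> pp q (F x) < e / 4" by metis
    then show "\<exists>C. compactin (prod_topology I J) C \<and> (\<forall>x\<in>?T. x \<notin> C \<longrightarrow> pp q (F x) < e / 4)" by blast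
  qed
  from bchoice[OF this] obtain CC where CC: "\<forall>q\<in>P. compactin (prod_topology I J) (CC q) \<and> (\<forall>x\<in>?T. x \<notin> CC q \<longrightarrow> pp q (F x) < e / 4)"
    by (elim exE)
  define K where "K = \<Union>(CC ` P)"
  have Kc: "compactin (prod_topology I J) K" unfolding K_def using CC P by (intro compactin_Union) auto
  have K1: "compactin I (fst ` K)" by (rule compact_fst[OF Kc])
  have K2: "compactin J (snd ` K)" by (rule compact_snd[OF Kc])
  have lcIJ: "locally_compact_space I \<and> locally_compact_space J" if "K \<noteq> {}"
  proof -
    have "?T \<noteq> {}" using that compactin_subset_topspace[OF Kc] by blast
    then have "prod_topology I J \<noteq> trivial_topology" by auto
    then show ?thesis using LC locally_compact_space_prod_topology by blast
  qed
  have "\<exists>U D. openin I U \<and> compactin I D \<and> fst ` K \<subseteq> U \<and> U \<subseteq> D"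
  proof (cases "K = {}")
    case True
    then show ?thesis by (intro exI[of _ "{}"]) auto
  next
    case False
    then show ?thesis using lc_nbhd[OF _ K1] lcIJ by blast
  qed
  then obtain O1 D1 where OD1: "openin I O1" "compactin I D1" "fst ` K \<subseteq> O1" "O1 \<subseteq> D1" by (elim exE conjE)
  have "\<exists>U D. openin J U \<and> compactin J D \<and> snd ` K \<subseteq> U \<and> U \<subseteq> D"
  proof (cases "K = {}")
    case True
    then show ?thesis by (intro exI[of _ "{}"]) auto
  next
    case False
    then show ?thesis using lc_nbhd[OF _ K2] lcIJ by blast
  qed
  then obtain O2 D2 where OD2: "openin J O2" "compactin J D2" "snd ` K \<subseteq> O2" "O2 \<subseteq> D2" by (elim exE conjE)
  have Pf: "finite (pp ` P)" "pp ` P \<subseteq> AZ" using P PP by auto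
  from core[OF X Y Z tensor CRI CRJ FC Pf K1 K2 OD1(1,3) OD2(1,3) e4] obtain w where
    w: "w \<in> tensor_span sZ tp (atoms I O1 sX) (atoms J O2 sY)"
       "\<forall>t\<in>fst ` K. \<forall>s\<in>snd ` K. (\<Sum>p\<in>pp ` P. p (F (t, s) - w (t, s))) \<le> e / 4"
       "\<forall>t\<in>topspace I. \<forall>s\<in>topspace J. \<forall>p\<in>pp ` P. p (w (t, s)) \<le> p (F (t, s)) + e / 4"
    by blast
  have "tensor_span sZ tp (atoms I O1 sX) (atoms J O2 sY) \<subseteq> tensor_span sZ tp (C0fun I AX) (C0fun J AY)"
    by (intro ts_mono atoms_C0[OF X HI OD1(2,4)] atoms_C0[OF Y HJ OD2(2,4)])
  then have wm: "w \<in> tensor_span sZ tp (C0fun I AX) (C0fun J AY)" using w(1) by blast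
  show "\<exists>w\<in>tensor_span sZ tp (C0fun I AX) (C0fun J AY). \<forall>q\<in>P. q (\<lambda>u. F u - w u) < e"
  proof (intro bexI[OF _ wm] ballI)
    fix q assume q: "q \<in> P"
    have qe: "q = (\<lambda>f. ssup ?T (\<lambda>x. pp q (f x)))" using PP q by blast
    have pq: "pp q \<in> pp ` P" using q by blast
    have snq: "seminorm sZ (pp q)" using hlcs_sn[OF Z] PP q by blast
    have snP: "\<And>p. p \<in> pp ` P \<Longrightarrow> seminorm sZ p" using hlcs_sn[OF Z] Pf(2) by blast
    have "ssup ?T (\<lambda>x. pp q (F x - w x)) \<le> 3 * e / 4"
    proof (rule ssup_le)
      show "0 \<le> 3 * e / 4" using e by simp
      fix x assume x: "x \<in> ?T"
      obtain t s where ts: "x = (t, s)" by (cases x)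
      have t: "t \<in> topspace I" and s: "s \<in> topspace J" using x ts by auto
      show "pp q (F x - w x) \<le> 3 * e / 4"
      proof (cases "x \<in> CC q")
        case True
        then have "x \<in> K" unfolding K_def using q by blast
        then have "t \<in> fst ` K" "s \<in> snd ` K" using ts by force+
        then have "(\<Sum>p\<in>pp ` P. p (F (t, s) - w (t, s))) \<le> e / 4" using w(2) by blast
        moreover have "pp q (F (t, s) - w (t, s)) \<le> (\<Sum>p\<in>pp ` P. p (F (t, s) - w (t, s)))"
          by (rule sum_seminorm_ge[OF vsZ snP Pf(1) pq])
        ultimately show ?thesis unfolding ts using e by linarith
      next
        case False
        then have Fs: "pp q (F x) < e / 4" using CC q x by blast
        have "pp q (F x - w x) \<le> pp q (F x) + pp q (w x)" by (rule sn_diff_le[OF vsZ snq])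
        also have "pp q (w x) \<le> pp q (F x) + e / 4" using w(3) t s pq unfolding ts by blast
        finally show ?thesis using Fs by linarith
      qed
    qed
    then show "q (\<lambda>u. F u - w u) < e" using e by (subst qe) simp
  qed
qed

end

theorem corollary3p25:
  fixes I :: "'i topology" and J :: "'j topology"
    and sX :: "complex \<Rightarrow> 'x::ab_group_add \<Rightarrow> 'x" and AX :: "('x \<Rightarrow> real) set"
    and sY :: "complex \<Rightarrow> 'y::ab_group_add \<Rightarrow> 'y" and AY :: "('y \<Rightarrow> real) set"
    and sZ :: "complex \<Rightarrow> 'z::ab_group_add \<Rightarrow> 'z" and AZ :: "('z \<Rightarrow> real) set"
    and tp :: "'x \<Rightarrow> 'y \<Rightarrow> 'z"
  assumes I: "completely_regular_space I" "Hausdorff_space I"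
    and J: "completely_regular_space J" "Hausdorff_space J"
    and X: "hlcs sX AX" and Y: "hlcs sY AY" and Z: "hlcs sZ AZ"
    and tensor: "alg_tensor sX sY sZ tp"
    and cont: "continuous_map (prod_topology (semtop AX) (semtop AY)) (semtop AZ) (\<lambda>(x, y). tp x y)"
  shows
    "(locally_compact_space (prod_topology I J) \<longrightarrow>
        tensor_span sZ tp (C0fun I AX) (C0fun J AY) \<subseteq> C0fun (prod_topology I J) AZ \<and>
        closure_in_fs (uniform_seminorms (prod_topology I J) AZ) (C0fun (prod_topology I J) AZ)
          (tensor_span sZ tp (C0fun I AX) (C0fun J AY)) = C0fun (prod_topology I J) AZ)
   \<and> (tensor_span sZ tp (Cbfun I AX) (Cbfun J AY) \<subseteq> Cbfun (prod_topology I J) AZ \<and>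
        closure_in_fs (strict_seminorms (prod_topology I J) AZ) (Cbfun (prod_topology I J) AZ)
          (tensor_span sZ tp (Cbfun I AX) (Cbfun J AY)) = Cbfun (prod_topology I J) AZ)
   \<and> (tensor_span sZ tp (Cfun I AX) (Cfun J AY) \<subseteq> Cfun (prod_topology I J) AZ \<and>
        closure_in_fs (compact_open_seminorms (prod_topology I J) AZ) (Cfun (prod_topology I J) AZ)
          (tensor_span sZ tp (Cfun I AX) (Cfun J AY)) = Cfun (prod_topology I J) AZ \<and>
        closure_in_fs (point_open_seminorms (prod_topology I J) AZ) (Cfun (prod_topology I J) AZ)
          (tensor_span sZ tp (Cfun I AX) (Cfun J AY)) = Cfun (prod_topology I J) AZ)"
proof -
  show ?thesis
  proof (intro conjI impI)
    assume LC: "locally_compact_space (prod_topology I J)"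
    show "tensor_span sZ tp (C0fun I AX) (C0fun J AY) \<subseteq> C0fun (prod_topology I J) AZ"
      by (rule ts_C0[OF X Y Z tensor cont I(2) J(2)])
    show "closure_in_fs (uniform_seminorms (prod_topology I J) AZ) (C0fun (prod_topology I J) AZ)
          (tensor_span sZ tp (C0fun I AX) (C0fun J AY)) = C0fun (prod_topology I J) AZ"
      by (rule closure_C0[OF X Y Z tensor I(1) J(1) I(2) J(2) LC])
  next
    show "tensor_span sZ tp (Cbfun I AX) (Cbfun J AY) \<subseteq> Cbfun (prod_topology I J) AZ"
      by (rule ts_Cb[OF X Y Z tensor cont])
    show "closure_in_fs (strict_seminorms (prod_topology I J) AZ) (Cbfun (prod_topology I J) AZ)
          (tensor_span sZ tp (Cbfun I AX) (Cbfun J AY)) = Cbfun (prod_topology I J) AZ"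
      by (rule closure_strict[OF X Y Z tensor I(1) J(1)])
    show "tensor_span sZ tp (Cfun I AX) (Cfun J AY) \<subseteq> Cfun (prod_topology I J) AZ"
      by (rule ts_Cfun[OF Z tensor cont])
    show "closure_in_fs (compact_open_seminorms (prod_topology I J) AZ) (Cfun (prod_topology I J) AZ)
          (tensor_span sZ tp (Cfun I AX) (Cfun J AY)) = Cfun (prod_topology I J) AZ"
      by (rule closure_compact_open[OF X Y Z tensor I(1) J(1)])
    show "closure_in_fs (point_open_seminorms (prod_topology I J) AZ) (Cfun (prod_topology I J) AZ)
          (tensor_span sZ tp (Cfun I AX) (Cfun J AY)) = Cfun (prod_topology I J) AZ"
      by (rule closure_point_open[OF X Y Z tensor I(1) J(1)])
  qed
qed

end
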